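(* Let a steady perfect fluid flow of class $C^2$ be given on a neighborhood $U$ of a point $p$ in a $(d+1)$-dimensional spacetime, with local chart $(\tau,\lambda,X^i)$ on $U$ as in the context, and let $\gamma:(\sigma_1,\sigma_2)\to U$ be the fluid world line through $p$, parametrized by proper time $\sigma$. On $\Gamma=(\sigma_1,\sigma_2)\times\mathbb R_{>0}$ define $$F(\sigma,n)=h(n,s)^2\,|g_{\tau\tau}(\gamma(\sigma))|\left[1+\left(\frac{\mu}{\sqrt{|g(\gamma(\sigma))|}\,n}\right)^2\right],$$ and let $c:(\sigma_1,\sigma_2)\to\Gamma$, $c(\sigma)=(\sigma,n(\gamma(\sigma)))$. If $p$ is a sonic point, then $p_c:=c(\gamma^{-1}(p))$ satisfies $\partial_nF|_{p_c}=0$ and $\partial_\sigma F|_{p_c}=0$, and $$\mathrm{Hess}:=\big\{(\partial_\sigma^2F)(\partial_n^2F)-(\partial_\sigma\partial_nF)^2\big\}\big|_{p_c}\le0 .$$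
   Context: Perfect fluid: positive functions $n,h,P,s,T$ and $\mathbf u$ ($\mathbf u\cdot\mathbf u=-1$) with $\mathbf dh=T\mathbf ds+n^{-1}\mathbf dP$, $\nabla\cdot(n\mathbf u)=0$, $\nabla\cdot(nh\,\mathbf u\otimes\mathbf u+P\mathbf g^{-1})=0$, equation of state $h=h(P,s)$ (equivalently $h=h(n,s)$), speed of sound $v_{\rm s}^2=(\partial\ln h/\partial\ln n)_s\in(0,1)$. Steady w.r.t. a timelike Killing field $\boldsymbol\xi$ on $U$: $\mathcal L_{\boldsymbol\xi}P=\mathcal L_{\boldsymbol\xi}s=0$, $\mathcal L_{\boldsymbol\xi}\mathbf u=0$. With $\bar{\boldsymbol\xi}=\boldsymbol\xi/\sqrt{|\boldsymbol\xi\cdot\boldsymbol\xi|}$, $\mathbf u=(1-v^2)^{-1/2}(\bar{\boldsymbol\xi}+v\bar{\boldsymbol\eta})$, $v\in[0,1)$, $\bar{\boldsymbol\eta}$ unit spacelike orthogonal to $\bar{\boldsymbol\xi}$, $\mathcal L_{\boldsymbol\xi}\bar{\boldsymbol\eta}=0$; sonic point: $v=v_{\rm s}$. Chart: coordinates $(\tau,\lambda,X^i)$ on $U$ with $\boldsymbol\xi=\boldsymbol\partial_\tau$, $\bar{\boldsymbol\eta}=\boldsymbol\partial_\lambda$ (so $g_{\lambda\lambda}=1$), the $X^i$ constant on the leaves spanned by $\boldsymbol\xi,\bar{\boldsymbol\eta}$; $g$ denotes $\det(g_{\mu\nu})$ in this chart. Along $\gamma$ (which lies in one leaf), $s$ is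 constant and $\mu:=\sqrt{|g|}\,n\,u^\lambda$ is constant, where $u^\lambda=d\lambda/d\sigma$. *)

theory Defs
  imports "HOL-Analysis.Analysis"
begin

definition dderiv :: "'a::real_normed_vector \<Rightarrow> ('a \<Rightarrow> 'b::real_normed_vector) \<Rightarrow> 'a \<Rightarrow> 'b" where
  "dderiv v f x = frechet_derivative f (at x) v"

definition C1_on :: "'a::euclidean_space set \<Rightarrow> ('a \<Rightarrow> real) \<Rightarrow> bool" where
  "C1_on U f \<longleftrightarrow> f differentiable_on U \<and> (\<forall>b\<in>Basis. continuous_on U (dderiv b f))"

definition C2_on :: "'a::euclidean_space set \<Rightarrow> ('a \<Rightarrow> real) \<Rightarrow> bool" where
  "C2_on U f \<longleftrightarrow> C1_on U f \<and> (\<forall>b\<in>Basis. C1_on U (dderiv b f))"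

definition pd :: "'n::finite \<Rightarrow> (real^'n \<Rightarrow> real) \<Rightarrow> real^'n \<Rightarrow> real" where
  "pd k f x = dderiv (axis k 1) f x"

text \<open>Lorentzian signature (-,+,...,+): symmetric, with a timelike vector whose
  g-orthogonal complement is positive definite.\<close>
definition lorentzian_matrix :: "real^'n^'n \<Rightarrow> bool" where
  "lorentzian_matrix A \<longleftrightarrow> A = transpose A \<and>
     (\<exists>t. t \<bullet> (A *v t) < 0 \<and> (\<forall>w. w \<noteq> 0 \<and> (A *v t) \<bullet> w = 0 \<longrightarrow> w \<bullet> (A *v w) > 0))"

definition christoffel :: "(real^'n \<Rightarrow> real^'n^'n) \<Rightarrow> 'n::finite \<Rightarrow> 'n \<Rightarrow> 'n \<Rightarrow> real^'n \<Rightarrow> real" where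
  "christoffel g a b c x = (1/2) * (\<Sum>d\<in>UNIV. matrix_inv (g x) $ a $ d *
      (pd b (\<lambda>y. g y $ d $ c) x + pd c (\<lambda>y. g y $ d $ b) x - pd d (\<lambda>y. g y $ b $ c) x))"

definition cov_div_vec :: "(real^'n \<Rightarrow> real^'n^'n) \<Rightarrow> (real^'n \<Rightarrow> real^'n) \<Rightarrow> real^'n \<Rightarrow> real" where
  "cov_div_vec g V x = (\<Sum>a\<in>UNIV. pd a (\<lambda>y. V y $ a) x)
      + (\<Sum>a\<in>UNIV. \<Sum>b\<in>UNIV. christoffel g a a b x * V x $ b)"

definition cov_div_tensor :: "(real^'n \<Rightarrow> real^'n^'n) \<Rightarrow> (real^'n \<Rightarrow> real^'n^'n) \<Rightarrow> 'n::finite \<Rightarrow> real^'n \<Rightarrow> real" where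
  "cov_div_tensor g S b x = (\<Sum>a\<in>UNIV. pd a (\<lambda>y. S y $ a $ b) x)
      + (\<Sum>a\<in>UNIV. \<Sum>c\<in>UNIV. christoffel g a a c x * S x $ c $ b)
      + (\<Sum>a\<in>UNIV. \<Sum>c\<in>UNIV. christoffel g b a c x * S x $ a $ c)"

text \<open>Squared speed of sound (d ln h / d ln n)_s for an equation of state h = H(n,s).\<close>
definition sound_speed_sq :: "(real \<times> real \<Rightarrow> real) \<Rightarrow> real \<Rightarrow> real \<Rightarrow> real" where
  "sound_speed_sq H m s = m * dderiv (1, 0) H (m, s) / H (m, s)"

definition fluid_F :: "(real \<times> real \<Rightarrow> real) \<Rightarrow> real \<Rightarrow> real \<Rightarrow> (real^'n \<Rightarrow> real^'n^'n) \<Rightarrow> 'n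
     \<Rightarrow> (real \<Rightarrow> real^'n) \<Rightarrow> real \<times> real \<Rightarrow> real" where
  "fluid_F H s0 mu0 g tau \<gamma> = (\<lambda>(\<sigma>, m). (H (m, s0))^2 * \<bar>g (\<gamma> \<sigma>) $ tau $ tau\<bar>
      * (1 + (mu0 / (sqrt \<bar>det (g (\<gamma> \<sigma>))\<bar> * m))^2))"

end

theory Submission
  imports Defs
begin

lemma dderiv_eq: "(f has_derivative f') (at x) \<Longrightarrow> dderiv v f x = f' v"
  unfolding dderiv_def using frechet_derivative_at by metis

lemma pd_eq: "(f has_derivative f') (at x) \<Longrightarrow> pd k f x = f' (axis k 1)"
  unfolding pd_def by (rule dderiv_eq)

lemma frechet_local:
  assumes "open U" "x \<in> U" "\<And>y. y \<in> U \<Longrightarrow> f y = g y"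
  shows "frechet_derivative f (at x) = frechet_derivative g (at x)"
proof -
  have "\<And>D. (f has_derivative D) (at x) \<longleftrightarrow> (g has_derivative D) (at x)"
    using assms has_derivative_transform_within_open[of _ _ x UNIV U] by metis
  then show ?thesis unfolding frechet_derivative_def by simp
qed

lemma dderiv_local:
  assumes "open U" "x \<in> U" "\<And>y. y \<in> U \<Longrightarrow> f y = g y"
  shows "dderiv v f x = dderiv v g x"
  unfolding dderiv_def using frechet_local[OF assms] by simp

lemma pd_local:
  assumes "open U" "x \<in> U" "\<And>y. y \<in> U \<Longrightarrow> f y = g y"
  shows "pd k f x = pd k g x"
  unfolding pd_def by (rule dderiv_local[OF assms])

lemma pd_local_const:
  assumes "open U" "x \<in> U" "\<And>y. y \<in> U \<Longrightarrow> f y = c"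
  shows "pd k f x = 0"
proof -
  have "pd k f x = pd k (\<lambda>y. c) x" by (rule pd_local[OF assms])
  also have "\<dots> = 0" by (rule pd_eq[of _ "\<lambda>_. 0", simplified]) simp
  finally show ?thesis .
qed

lemma C1_diff: "C1_on U f \<Longrightarrow> open U \<Longrightarrow> x \<in> U \<Longrightarrow> f differentiable (at x)"
  unfolding C1_on_def differentiable_on_def using at_within_open by metis

lemma C2_diff: "C2_on U f \<Longrightarrow> open U \<Longrightarrow> x \<in> U \<Longrightarrow> f differentiable (at x)"
  unfolding C2_on_def using C1_diff by blast

lemma C2_dd_diff: "C2_on U f \<Longrightarrow> open U \<Longrightarrow> x \<in> U \<Longrightarrow> b \<in> Basis \<Longrightarrow> dderiv b f differentiable (at x)"
  unfolding C2_on_def using C1_diff by blast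

lemma C2_pd_diff: "C2_on (U::(real^'n::finite) set) f \<Longrightarrow> open U \<Longrightarrow> x \<in> U \<Longrightarrow> pd k f differentiable (at x)"
proof -
  assume a: "C2_on U f" "open U" "x \<in> U"
  have "pd k f = dderiv (axis k 1) f" by (rule ext) (simp add: pd_def)
  then show ?thesis using C2_dd_diff[OF a, of "axis k 1"] by simp
qed

lemma fd_expand:
  fixes f :: "real^'n::finite \<Rightarrow> real"
  assumes "f differentiable (at x)"
  shows "frechet_derivative f (at x) v = (\<Sum>k\<in>UNIV. v$k * pd k f x)"
proof -
  have D: "(f has_derivative frechet_derivative f (at x)) (at x)"
    using assms frechet_derivative_works by blast
  then have lin: "linear (frechet_derivative f (at x))" using has_derivative_linear by blast
  have "v = (\<Sum>k\<in>UNIV. v$k *\<^sub>R axis k 1)"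
    using basis_expansion[of v] by (simp add: scalar_mult_eq_scaleR)
  then have "frechet_derivative f (at x) v = frechet_derivative f (at x) (\<Sum>k\<in>UNIV. v$k *\<^sub>R axis k 1)" by simp
  also have "\<dots> = (\<Sum>k\<in>UNIV. v$k * frechet_derivative f (at x) (axis k 1))"
    using lin by (simp add: linear_sum linear_scale)
  also have "\<dots> = (\<Sum>k\<in>UNIV. v$k * pd k f x)"
    using pd_eq[OF D] by simp
  finally show ?thesis .
qed

lemma pd_add: "f differentiable (at x) \<Longrightarrow> g differentiable (at x) \<Longrightarrow>
  pd k (\<lambda>y. f y + g y) x = pd k f x + pd k g x"
proof -
  assume "f differentiable (at x)" "g differentiable (at x)"
  then obtain F G where F: "(f has_derivative F) (at x)" and G: "(g has_derivative G) (at x)"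
    unfolding differentiable_def by blast
  have "((\<lambda>y. f y + g y) has_derivative (\<lambda>h. F h + G h)) (at x)" using has_derivative_add[OF F G] .
  from pd_eq[OF this] pd_eq[OF F] pd_eq[OF G] show ?thesis by simp
qed

lemma pd_diff: "f differentiable (at x) \<Longrightarrow> g differentiable (at x) \<Longrightarrow>
  pd k (\<lambda>y. f y - g y) x = pd k f x - pd k g x"
proof -
  assume "f differentiable (at x)" "g differentiable (at x)"
  then obtain F G where F: "(f has_derivative F) (at x)" and G: "(g has_derivative G) (at x)"
    unfolding differentiable_def by blast
  have "((\<lambda>y. f y - g y) has_derivative (\<lambda>h. F h - G h)) (at x)" using has_derivative_diff[OF F G] .
  from pd_eq[OF this] pd_eq[OF F] pd_eq[OF G] show ?thesis by simp
qed

lemma pd_mult: "f differentiable (at x) \<Longrightarrow> g differentiable (at x) \<Longrightarrow>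
  pd k (\<lambda>y. f y * g y :: real) x = f x * pd k g x + pd k f x * g x"
proof -
  assume "f differentiable (at x)" "g differentiable (at x)"
  then obtain F G where F: "(f has_derivative F) (at x)" and G: "(g has_derivative G) (at x)"
    unfolding differentiable_def by blast
  have "((\<lambda>y. f y * g y) has_derivative (\<lambda>h. f x * G h + F h * g x)) (at x)" using has_derivative_mult[OF F G] .
  from pd_eq[OF this] pd_eq[OF F] pd_eq[OF G] show ?thesis by simp
qed

lemma pd_sum: "finite S \<Longrightarrow> (\<And>i. i \<in> S \<Longrightarrow> f i differentiable (at x)) \<Longrightarrow>
  pd k (\<lambda>y. \<Sum>i\<in>S. f i y :: real) x = (\<Sum>i\<in>S. pd k (f i) x)"
proof -
  assume fin: "finite S" and d: "\<And>i. i \<in> S \<Longrightarrow> f i differentiable (at x)"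
  have "\<And>i. i \<in> S \<Longrightarrow> (f i has_derivative frechet_derivative (f i) (at x)) (at x)"
    using d frechet_derivative_works by blast
  then have "((\<lambda>y. \<Sum>i\<in>S. f i y) has_derivative (\<lambda>h. \<Sum>i\<in>S. frechet_derivative (f i) (at x) h)) (at x)"
    by (rule has_derivative_sum)
  then have "pd k (\<lambda>y. \<Sum>i\<in>S. f i y) x = (\<Sum>i\<in>S. frechet_derivative (f i) (at x) (axis k 1))"
    by (rule pd_eq)
  also have "\<dots> = (\<Sum>i\<in>S. pd k (f i) x)" by (simp add: pd_def dderiv_def)
  finally show ?thesis .
qed

lemma pd_cmult: "f differentiable (at x) \<Longrightarrow> pd k (\<lambda>y. c * f y :: real) x = c * pd k f x"
  using pd_mult[of "\<lambda>_. c" x f k] pd_eq[of "\<lambda>_. c" "\<lambda>_. 0" x k] by simp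

lemma has_derivative_det:
  fixes M :: "'a::real_normed_vector \<Rightarrow> real^'n::finite^'n"
  assumes "\<And>i j. ((\<lambda>y. M y $ i $ j) has_derivative M' i j) (at x within S)"
  shows "((\<lambda>y. det (M y)) has_derivative (\<lambda>h. \<Sum>p\<in>{p. p permutes (UNIV::'n set)}.
      of_int (sign p) * (\<Sum>i\<in>UNIV. M' i (p i) h * (\<Prod>j\<in>UNIV-{i}. M x $ j $ p j)))) (at x within S)"
  unfolding det_def
  by (intro has_derivative_sum has_derivative_mult_right has_derivative_prod assms)

lemma det_differentiable:
  fixes M :: "'a::real_normed_vector \<Rightarrow> real^'n::finite^'n"
  assumes "\<And>i j. (\<lambda>y. M y $ i $ j) differentiable (at x)"
  shows "(\<lambda>y. det (M y)) differentiable (at x)"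
proof -
  have "\<forall>ij. \<exists>D. ((\<lambda>y. M y $ fst ij $ snd ij) has_derivative D) (at x)"
    using assms unfolding differentiable_def by blast
  from choice[OF this] obtain D where D: "\<And>ij. ((\<lambda>y. M y $ fst ij $ snd ij) has_derivative D ij) (at x)"
    by blast
  have "\<And>i j. ((\<lambda>y. M y $ i $ j) has_derivative D (i,j)) (at x)" using D[of "(i,j)" for i j] by simp
  from has_derivative_det[OF this] show ?thesis unfolding differentiable_def by blast
qed

lemma inv_props:
  fixes A :: "real^'n::finite^'n"
  assumes "det A \<noteq> 0"
  shows "A ** matrix_inv A = mat 1" "matrix_inv A ** A = mat 1"
proof -
  have "invertible A" using assms invertible_det_nz by blast
  then have "\<exists>A'. A ** A' = mat 1 \<and> A' ** A = mat 1" unfolding invertible_def by blast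
  then have "A ** matrix_inv A = mat 1 \<and> matrix_inv A ** A = mat 1"
    unfolding matrix_inv_def by (rule someI_ex)
  then show "A ** matrix_inv A = mat 1" "matrix_inv A ** A = mat 1" by auto
qed

lemma inv_sym:
  fixes A :: "real^'n::finite^'n"
  assumes "det A \<noteq> 0" "A = transpose A"
  shows "transpose (matrix_inv A) = matrix_inv A"
proof -
  let ?B = "matrix_inv A"
  have "transpose ?B ** A = mat 1"
    by (metis assms(2) inv_props(1)[OF assms(1)] matrix_transpose_mul transpose_mat)
  then have "transpose ?B = (transpose ?B ** A) ** ?B"
    by (metis inv_props(1)[OF assms(1)] matrix_mul_assoc matrix_mul_rid)
  also have "\<dots> = ?B" using \<open>transpose ?B ** A = mat 1\<close> by simp
  finally show ?thesis .
qed

lemma inv_sym_entry: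
  fixes A :: "real^'n::finite^'n"
  assumes "det A \<noteq> 0" "A = transpose A"
  shows "matrix_inv A $ i $ j = matrix_inv A $ j $ i"
proof -
  have "transpose (matrix_inv A) $ i $ j = matrix_inv A $ i $ j" using inv_sym[OF assms] by simp
  then show ?thesis by (simp add: transpose_def)
qed

lemma mat_mul_entry: "(A ** B) $ i $ j = (\<Sum>k\<in>UNIV. A $ i $ k * B $ k $ j)"
  by (simp add: matrix_matrix_mult_def)

lemma inv_entry_sum:
  fixes A :: "real^'n::finite^'n"
  assumes "det A \<noteq> 0"
  shows "(\<Sum>k\<in>UNIV. A $ i $ k * matrix_inv A $ k $ j) = (if i = j then 1 else 0)"
        "(\<Sum>k\<in>UNIV. matrix_inv A $ i $ k * A $ k $ j) = (if i = j then 1 else 0)"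
proof -
  have "(A ** matrix_inv A) $ i $ j = mat 1 $ i $ j" "(matrix_inv A ** A) $ i $ j = mat 1 $ i $ j"
    using inv_props[OF assms] by simp_all
  then show "(\<Sum>k\<in>UNIV. A $ i $ k * matrix_inv A $ k $ j) = (if i = j then 1 else 0)"
        "(\<Sum>k\<in>UNIV. matrix_inv A $ i $ k * A $ k $ j) = (if i = j then 1 else 0)"
    by (simp_all add: mat_mul_entry mat_def)
qed

lemma inv_cramer:
  fixes A :: "real^'n::finite^'n"
  assumes "det A \<noteq> 0"
  shows "matrix_inv A $ k $ j = det (\<chi> i l. if l = k then axis j 1 $ i else A $ i $ l) / det A"
proof -
  let ?x = "\<chi> k. matrix_inv A $ k $ j"
  have "A *v ?x = axis j 1"
    using inv_entry_sum(1)[OF assms]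
    by (simp add: vec_eq_iff matrix_vector_mult_def axis_def)
  then have "?x = (\<chi> k. det(\<chi> i l. if l = k then axis j 1 $ i else A $ i $ l) / det A)"
    using cramer[OF assms] by blast
  then have "?x $ k = (\<chi> k. det(\<chi> i l. if l = k then axis j 1 $ i else A $ i $ l) / det A) $ k"
    by simp
  then show ?thesis by simp
qed

lemma det_row_replace:
  fixes A B :: "real^'n::finite^'n"
  shows "det (\<chi> j. if j = i then B $ i else A $ j) =
    (\<Sum>p\<in>{p. p permutes (UNIV::'n set)}. of_int (sign p) * (B $ i $ p i * (\<Prod>j\<in>UNIV-{i}. A $ j $ p j)))"
  unfolding det_def
proof (rule sum.cong[OF refl])
  fix p
  have "(\<Prod>j\<in>UNIV. (\<chi> j. if j = i then B $ i else A $ j) $ j $ p j)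
      = (\<chi> j. if j = i then B $ i else A $ j) $ i $ p i * (\<Prod>j\<in>UNIV-{i}. (\<chi> j. if j = i then B $ i else A $ j) $ j $ p j)"
    by (rule prod.remove) auto
  also have "\<dots> = B $ i $ p i * (\<Prod>j\<in>UNIV-{i}. A $ j $ p j)"
    by (auto intro!: prod.cong)
  finally show "of_int (sign p) * (\<Prod>j\<in>UNIV. (\<chi> j. if j = i then B $ i else A $ j) $ j $ p j) =
    of_int (sign p) * (B $ i $ p i * (\<Prod>j\<in>UNIV-{i}. A $ j $ p j))" by simp
qed

lemma det_row_replace_cramer:
  fixes A B :: "real^'n::finite^'n"
  assumes "det A \<noteq> 0"
  shows "det (\<chi> j. if j = i then B $ i else A $ j) = (B ** matrix_inv A) $ i $ i * det A"
proof -
  let ?X = "B ** matrix_inv A"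
  have XA: "?X ** A = B" using inv_props(2)[OF assms] by (metis matrix_mul_assoc matrix_mul_rid)
  have "(\<Sum>j\<in>UNIV. ?X $ i $ j *s row j A) = B $ i"
  proof -
    have "(\<Sum>j\<in>UNIV. ?X $ i $ j *s row j A) = (?X ** A) $ i"
      by (simp add: vec_eq_iff sum_component row_def matrix_matrix_mult_def)
    then show ?thesis using XA by simp
  qed
  moreover have "(\<chi> j. if j = i then B $ i else A $ j) = (\<chi> j. if j = i then (\<Sum>l\<in>UNIV. (?X $ i) $ l *s row l A) else row j A)"
    using calculation by (simp add: vec_eq_iff row_def)
  ultimately show ?thesis
    using cramer_lemma_transpose[of i "?X $ i" A] by simp
qed

lemma jacobi_alg:
  fixes A B :: "real^'n::finite^'n"
  assumes "det A \<noteq> 0"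
  shows "(\<Sum>p\<in>{p. p permutes (UNIV::'n set)}. of_int (sign p) *
      (\<Sum>i\<in>UNIV. B $ i $ p i * (\<Prod>j\<in>UNIV-{i}. A $ j $ p j)))
    = det A * (\<Sum>i\<in>UNIV. \<Sum>k\<in>UNIV. B $ i $ k * matrix_inv A $ k $ i)"
proof -
  have "(\<Sum>p\<in>{p. p permutes (UNIV::'n set)}. of_int (sign p) *
      (\<Sum>i\<in>UNIV. B $ i $ p i * (\<Prod>j\<in>UNIV-{i}. A $ j $ p j)))
    = (\<Sum>i\<in>UNIV. \<Sum>p\<in>{p. p permutes (UNIV::'n set)}. of_int (sign p) * (B $ i $ p i * (\<Prod>j\<in>UNIV-{i}. A $ j $ p j)))"
    unfolding sum_distrib_left by (rule sum.swap)
  also have "\<dots> = (\<Sum>i\<in>UNIV. det (\<chi> j. if j = i then B $ i else A $ j))"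
    by (simp add: det_row_replace)
  also have "\<dots> = (\<Sum>i\<in>UNIV. (B ** matrix_inv A) $ i $ i * det A)"
    by (simp add: det_row_replace_cramer[OF assms])
  also have "\<dots> = (\<Sum>i\<in>UNIV. \<Sum>k\<in>UNIV. B $ i $ k * matrix_inv A $ k $ i) * det A"
    by (simp add: mat_mul_entry sum_distrib_right)
  also have "\<dots> = det A * (\<Sum>i\<in>UNIV. \<Sum>k\<in>UNIV. B $ i $ k * matrix_inv A $ k $ i)"
    by (rule mult.commute)
  finally show ?thesis .
qed

lemma lorentz_det:
  fixes A :: "real^'n::finite^'n"
  assumes "lorentzian_matrix A"
  shows "det A \<noteq> 0"
proof
  assume d: "det A = 0"
  obtain t where t: "t \<bullet> (A *v t) < 0" and pos: "\<And>w. w \<noteq> 0 \<Longrightarrow> (A *v t) \<bullet> w = 0 \<Longrightarrow> w \<bullet> (A *v w) > 0"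
    and sym: "A = transpose A"
    using assms unfolding lorentzian_matrix_def by blast
  have ni: "\<not> invertible A" using d invertible_det_nz by blast
  have "\<not> (\<exists>B. B ** A = mat 1)"
  proof
    assume "\<exists>B. B ** A = mat 1"
    then obtain B where "B ** A = mat 1" by blast
    moreover then have "A ** B = mat 1" using matrix_left_right_inverse by blast
    ultimately show False using ni unfolding invertible_def by blast
  qed
  then obtain w where w: "A *v w = 0" "w \<noteq> 0"
    using matrix_left_invertible_ker by blast
  have "(A *v t) \<bullet> w = t \<bullet> (A *v w)"
  proof -
    have "(A *v t) \<bullet> w = (transpose A *v t) \<bullet> w" using sym by simp
    also have "\<dots> = (t v* A) \<bullet> w" by simp
    also have "\<dots> = t \<bullet> (A *v w)" by (rule dot_lmul_matrix)
    finally show ?thesis .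
  qed
  then have "(A *v t) \<bullet> w = 0" using w by simp
  then have "w \<bullet> (A *v w) > 0" using pos w by blast
  then show False using w by simp
qed

lemma sum_delta_l: "(\<Sum>k\<in>(UNIV::'n::finite set). (if i = k then 1 else 0) * f k) = (f i :: real)"
proof -
  have "\<And>k. (if i = k then 1 else 0) * f k = (if i = k then f k else 0)" by simp
  then show ?thesis by simp
qed

lemma alg_L3:
  fixes G Gi :: "'n::finite \<Rightarrow> 'n \<Rightarrow> real" and X :: "'n \<Rightarrow> real"
  assumes Gsym: "\<And>i j. G i j = G j i"
    and inv: "\<And>i j. (\<Sum>k\<in>UNIV. G i k * Gi k j) = (if i = j then 1 else 0)"
  shows "(\<Sum>b\<in>UNIV. G b c * (1/2 * (\<Sum>d\<in>UNIV. Gi b d * X d))) = 1/2 * X c"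
proof -
  have "(\<Sum>b\<in>UNIV. G b c * (1/2 * (\<Sum>d\<in>UNIV. Gi b d * X d)))
      = 1/2 * (\<Sum>b\<in>UNIV. \<Sum>d\<in>UNIV. G c b * Gi b d * X d)"
    by (simp add: sum_distrib_left Gsym[of _ c] mult.assoc)
  also have "\<dots> = 1/2 * (\<Sum>d\<in>UNIV. \<Sum>b\<in>UNIV. G c b * Gi b d * X d)"
    by (subst sum.swap) (rule refl)
  also have "\<dots> = 1/2 * (\<Sum>d\<in>UNIV. (\<Sum>b\<in>UNIV. G c b * Gi b d) * X d)"
    by (simp add: sum_distrib_right)
  also have "\<dots> = 1/2 * X c"
    by (simp add: inv sum_delta_l)
  finally show ?thesis .
qed

lemma alg_lower:
  fixes G Gi S dS :: "'n::finite \<Rightarrow> 'n \<Rightarrow> real" and dg Gam :: "'n \<Rightarrow> 'n \<Rightarrow> 'n \<Rightarrow> real"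
  assumes Gsym: "\<And>i j. G i j = G j i"
    and inv: "\<And>i j. (\<Sum>k\<in>UNIV. G i k * Gi k j) = (if i = j then 1 else 0)"
    and dgsym: "\<And>k i j. dg k i j = dg k j i"
    and Ssym: "\<And>i j. S i j = S j i"
    and Gam: "\<And>a b e. Gam a b e = 1/2 * (\<Sum>d\<in>UNIV. Gi a d * (dg b d e + dg e d b - dg d b e))"
  shows "(\<Sum>b\<in>UNIV. G b c * ((\<Sum>a\<in>UNIV. dS a b) + (\<Sum>a\<in>UNIV. \<Sum>e\<in>UNIV. Gam a a e * S e b)
            + (\<Sum>a\<in>UNIV. \<Sum>e\<in>UNIV. Gam b a e * S a e)))
   = (\<Sum>a\<in>UNIV. \<Sum>b\<in>UNIV. G b c * dS a b + dg a b c * S a b)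
     + (\<Sum>a\<in>UNIV. \<Sum>e\<in>UNIV. Gam a a e * (\<Sum>b\<in>UNIV. S e b * G b c))
     - 1/2 * (\<Sum>a\<in>UNIV. \<Sum>e\<in>UNIV. S a e * dg c a e)"
proof -
  have T1: "(\<Sum>b\<in>UNIV. G b c * (\<Sum>a\<in>UNIV. dS a b)) =
     (\<Sum>a\<in>UNIV. \<Sum>b\<in>UNIV. G b c * dS a b + dg a b c * S a b) - (\<Sum>a\<in>UNIV. \<Sum>b\<in>UNIV. dg a b c * S a b)"
  proof -
    have "(\<Sum>b\<in>UNIV. G b c * (\<Sum>a\<in>UNIV. dS a b)) = (\<Sum>b\<in>UNIV. \<Sum>a\<in>UNIV. G b c * dS a b)"
      by (simp add: sum_distrib_left)
    also have "\<dots> = (\<Sum>a\<in>UNIV. \<Sum>b\<in>UNIV. G b c * dS a b)" by (rule sum.swap)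
    finally show ?thesis by (simp add: sum.distrib)
  qed
  have T2: "(\<Sum>b\<in>UNIV. G b c * (\<Sum>a\<in>UNIV. \<Sum>e\<in>UNIV. Gam a a e * S e b))
      = (\<Sum>a\<in>UNIV. \<Sum>e\<in>UNIV. Gam a a e * (\<Sum>b\<in>UNIV. S e b * G b c))"
  proof -
    have "(\<Sum>b\<in>UNIV. G b c * (\<Sum>a\<in>UNIV. \<Sum>e\<in>UNIV. Gam a a e * S e b))
        = (\<Sum>b\<in>UNIV. \<Sum>a\<in>UNIV. \<Sum>e\<in>UNIV. Gam a a e * (S e b * G b c))"
      by (simp add: sum_distrib_left mult_ac)
    also have "\<dots> = (\<Sum>a\<in>UNIV. \<Sum>b\<in>UNIV. \<Sum>e\<in>UNIV. Gam a a e * (S e b * G b c))" by (rule sum.swap)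
    also have "\<dots> = (\<Sum>a\<in>UNIV. \<Sum>e\<in>UNIV. \<Sum>b\<in>UNIV. Gam a a e * (S e b * G b c))"
      by (rule sum.cong[OF refl], rule sum.swap)
    also have "\<dots> = (\<Sum>a\<in>UNIV. \<Sum>e\<in>UNIV. Gam a a e * (\<Sum>b\<in>UNIV. S e b * G b c))"
      by (simp add: sum_distrib_left)
    finally show ?thesis .
  qed
  have L3: "\<And>a e. (\<Sum>b\<in>UNIV. G b c * Gam b a e) = 1/2 * (dg a c e + dg e c a - dg c a e)"
    unfolding Gam by (rule alg_L3[OF Gsym inv])
  have T3: "(\<Sum>b\<in>UNIV. G b c * (\<Sum>a\<in>UNIV. \<Sum>e\<in>UNIV. Gam b a e * S a e))
      = (\<Sum>a\<in>UNIV. \<Sum>e\<in>UNIV. S a e * (1/2 * (dg a c e + dg e c a - dg c a e)))"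
  proof -
    have "(\<Sum>b\<in>UNIV. G b c * (\<Sum>a\<in>UNIV. \<Sum>e\<in>UNIV. Gam b a e * S a e))
        = (\<Sum>b\<in>UNIV. \<Sum>a\<in>UNIV. \<Sum>e\<in>UNIV. S a e * (G b c * Gam b a e))"
      by (simp add: sum_distrib_left mult_ac)
    also have "\<dots> = (\<Sum>a\<in>UNIV. \<Sum>b\<in>UNIV. \<Sum>e\<in>UNIV. S a e * (G b c * Gam b a e))" by (rule sum.swap)
    also have "\<dots> = (\<Sum>a\<in>UNIV. \<Sum>e\<in>UNIV. \<Sum>b\<in>UNIV. S a e * (G b c * Gam b a e))"
      by (rule sum.cong[OF refl], rule sum.swap)
    also have "\<dots> = (\<Sum>a\<in>UNIV. \<Sum>e\<in>UNIV. S a e * (\<Sum>b\<in>UNIV. G b c * Gam b a e))"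
      by (simp add: sum_distrib_left)
    also have "\<dots> = (\<Sum>a\<in>UNIV. \<Sum>e\<in>UNIV. S a e * (1/2 * (dg a c e + dg e c a - dg c a e)))"
      by (simp add: L3)
    finally show ?thesis .
  qed
  have T3b: "(\<Sum>a\<in>UNIV. \<Sum>e\<in>UNIV. S a e * (1/2 * (dg a c e + dg e c a - dg c a e)))
     = (\<Sum>a\<in>UNIV. \<Sum>b\<in>UNIV. dg a b c * S a b) - 1/2 * (\<Sum>a\<in>UNIV. \<Sum>e\<in>UNIV. S a e * dg c a e)"
  proof -
    have sw: "(\<Sum>a\<in>UNIV. \<Sum>e\<in>UNIV. S a e * dg e c a) = (\<Sum>a\<in>UNIV. \<Sum>e\<in>UNIV. S a e * dg a c e)"
    proof -
      have "(\<Sum>a\<in>UNIV. \<Sum>e\<in>UNIV. S a e * dg e c a) = (\<Sum>e\<in>UNIV. \<Sum>a\<in>UNIV. S a e * dg e c a)"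
        by (rule sum.swap)
      also have "\<dots> = (\<Sum>e\<in>UNIV. \<Sum>a\<in>UNIV. S e a * dg e c a)" by (simp add: Ssym)
      finally show ?thesis .
    qed
    have "(\<Sum>a\<in>UNIV. \<Sum>e\<in>UNIV. S a e * (1/2 * (dg a c e + dg e c a - dg c a e)))
       = 1/2 * (\<Sum>a\<in>UNIV. \<Sum>e\<in>UNIV. S a e * dg a c e) + 1/2 * (\<Sum>a\<in>UNIV. \<Sum>e\<in>UNIV. S a e * dg e c a)
         - 1/2 * (\<Sum>a\<in>UNIV. \<Sum>e\<in>UNIV. S a e * dg c a e)"
      by (simp add: sum_distrib_left sum.distrib sum_subtractf algebra_simps)
    also have "\<dots> = (\<Sum>a\<in>UNIV. \<Sum>e\<in>UNIV. S a e * dg a c e) - 1/2 * (\<Sum>a\<in>UNIV. \<Sum>e\<in>UNIV. S a e * dg c a e)"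
      using sw by simp
    finally have A: "(\<Sum>a\<in>UNIV. \<Sum>e\<in>UNIV. S a e * (1/2 * (dg a c e + dg e c a - dg c a e))) = (\<Sum>a\<in>UNIV. \<Sum>e\<in>UNIV. S a e * dg a c e) - 1/2 * (\<Sum>a\<in>UNIV. \<Sum>e\<in>UNIV. S a e * dg c a e)" .
    have B: "(\<Sum>a\<in>UNIV. \<Sum>e\<in>UNIV. S a e * dg a c e) = (\<Sum>a\<in>UNIV. \<Sum>b\<in>UNIV. dg a b c * S a b)"
      by (simp add: dgsym[of _ c] mult.commute)
    show ?thesis by (simp only: A B)
  qed
  have split: "(\<Sum>b\<in>UNIV. G b c * ((\<Sum>a\<in>UNIV. dS a b) + (\<Sum>a\<in>UNIV. \<Sum>e\<in>UNIV. Gam a a e * S e b)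
            + (\<Sum>a\<in>UNIV. \<Sum>e\<in>UNIV. Gam b a e * S a e)))
     = (\<Sum>b\<in>UNIV. G b c * (\<Sum>a\<in>UNIV. dS a b)) + (\<Sum>b\<in>UNIV. G b c * (\<Sum>a\<in>UNIV. \<Sum>e\<in>UNIV. Gam a a e * S e b))
       + (\<Sum>b\<in>UNIV. G b c * (\<Sum>a\<in>UNIV. \<Sum>e\<in>UNIV. Gam b a e * S a e))"
    by (simp only: distrib_left sum.distrib)
  show ?thesis
    unfolding split T1 T2 T3 T3b by linarith
qed

lemma alg_contracted:
  fixes Gi :: "'n::finite \<Rightarrow> 'n \<Rightarrow> real" and dg Gam :: "'n \<Rightarrow> 'n \<Rightarrow> 'n \<Rightarrow> real"
  assumes Gisym: "\<And>i j. Gi i j = Gi j i"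
    and Gam: "\<And>a b e. Gam a b e = 1/2 * (\<Sum>d\<in>UNIV. Gi a d * (dg b d e + dg e d b - dg d b e))"
  shows "(\<Sum>a\<in>UNIV. Gam a a c) = 1/2 * (\<Sum>a\<in>UNIV. \<Sum>d\<in>UNIV. Gi a d * dg c d a)"
proof -
  have sw: "(\<Sum>a\<in>UNIV. \<Sum>d\<in>UNIV. Gi a d * dg d a c) = (\<Sum>a\<in>UNIV. \<Sum>d\<in>UNIV. Gi a d * dg a d c)"
  proof -
    have "(\<Sum>a\<in>UNIV. \<Sum>d\<in>UNIV. Gi a d * dg d a c) = (\<Sum>d\<in>UNIV. \<Sum>a\<in>UNIV. Gi a d * dg d a c)"
      by (rule sum.swap)
    also have "\<dots> = (\<Sum>d\<in>UNIV. \<Sum>a\<in>UNIV. Gi d a * dg d a c)" by (simp add: Gisym)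
    finally show ?thesis .
  qed
  have "(\<Sum>a\<in>UNIV. Gam a a c) = 1/2 * (\<Sum>a\<in>UNIV. \<Sum>d\<in>UNIV. Gi a d * dg a d c)
      + 1/2 * (\<Sum>a\<in>UNIV. \<Sum>d\<in>UNIV. Gi a d * dg c d a) - 1/2 * (\<Sum>a\<in>UNIV. \<Sum>d\<in>UNIV. Gi a d * dg d a c)"
    by (simp add: Gam sum_distrib_left sum.distrib sum_subtractf algebra_simps)
  then show ?thesis using sw by simp
qed

lemma diff_local:
  assumes "open U" "x \<in> U" "\<And>y. y \<in> U \<Longrightarrow> f y = g y" "f differentiable (at x)"
  shows "g differentiable (at x)"
proof -
  obtain D where "(f has_derivative D) (at x)" using assms(4) unfolding differentiable_def by blast
  then have "(g has_derivative D) (at x)"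
    by (rule has_derivative_transform_within_open[OF _ assms(1,2)]) (rule assms(3))
  then show ?thesis unfolding differentiable_def by blast
qed

lemma inv_entry_diff:
  fixes g :: "real^'n::finite \<Rightarrow> real^'n^'n"
  assumes U: "open U" "x \<in> U" and det: "\<And>y. y \<in> U \<Longrightarrow> det (g y) \<noteq> 0"
    and gd: "\<And>i j. (\<lambda>y. g y $ i $ j) differentiable (at x)"
  shows "(\<lambda>y. matrix_inv (g y) $ k $ j) differentiable (at x)"
proof (rule diff_local[OF U])
  show "\<And>y. y \<in> U \<Longrightarrow> det (\<chi> i l. if l = k then axis j 1 $ i else g y $ i $ l) / det (g y) = matrix_inv (g y) $ k $ j"
  proof -
    fix y assume "y \<in> U"
    then have "det (g y) \<noteq> 0" by (rule det)
    then show "det (\<chi> i l. if l = k then axis j 1 $ i else g y $ i $ l) / det (g y) = matrix_inv (g y) $ k $ j"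
      by (rule inv_cramer[symmetric])
  qed
  have "\<And>i l. (\<lambda>y. (\<chi> i l. if l = k then axis j 1 $ i else g y $ i $ l) $ i $ l) differentiable (at x)"
  proof -
    fix i l
    show "(\<lambda>y. (\<chi> i l. if l = k then axis j 1 $ i else g y $ i $ l) $ i $ l) differentiable (at x)"
      using gd[of i l] by (cases "l = k") simp_all
  qed
  from det_differentiable[OF this] show "(\<lambda>y. det (\<chi> i l. if l = k then axis j 1 $ i else g y $ i $ l) / det (g y)) differentiable (at x)"
    using det_differentiable[OF gd] det[OF U(2)] by (intro differentiable_divide) auto
qed

lemma sym_entry: "A = transpose A \<Longrightarrow> A $ i $ j = A $ j $ i"
  by (metis transpose_def vec_lambda_beta)

lemma euler_lowered:
  fixes g :: "real^'n::finite \<Rightarrow> real^'n^'n" and u :: "real^'n \<Rightarrow> real^'n"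
    and n h P :: "real^'n \<Rightarrow> real"
  assumes U: "open U" "x \<in> U"
    and sym: "\<And>y. y \<in> U \<Longrightarrow> g y = transpose (g y)"
    and det: "\<And>y. y \<in> U \<Longrightarrow> det (g y) \<noteq> 0"
    and gd: "\<And>i j. (\<lambda>y. g y $ i $ j) differentiable (at x)"
    and nd: "n differentiable (at x)" and hd: "h differentiable (at x)" and Pd: "P differentiable (at x)"
    and ud: "\<And>i. (\<lambda>y. u y $ i) differentiable (at x)"
    and cont: "cov_div_vec g (\<lambda>y. n y *\<^sub>R u y) x = 0"
    and eul: "\<And>b. cov_div_tensor g
        (\<lambda>y. \<chi> a c. n y * h y * (u y $ a) * (u y $ c) + P y * matrix_inv (g y) $ a $ c) b x = 0"
  shows "n x * (\<Sum>a\<in>UNIV. u x $ a * pd a (\<lambda>y. h y * (\<Sum>b\<in>UNIV. g y $ b $ c * u y $ b)) x) + pd c P x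
         - 1/2 * (n x * h x) * (\<Sum>a\<in>UNIV. \<Sum>e\<in>UNIV. u x $ a * u x $ e * pd c (\<lambda>y. g y $ a $ e) x) = 0"
proof -
  define G where "G i j = g x $ i $ j" for i j
  define Gi where "Gi i j = matrix_inv (g x) $ i $ j" for i j
  define dg where "dg k i j = pd k (\<lambda>y. g y $ i $ j) x" for k i j
  define Sf where "Sf y a b = n y * h y * u y $ a * u y $ b + P y * matrix_inv (g y) $ a $ b" for y a b
  define S where "S a b = Sf x a b" for a b
  define dS where "dS a b = pd a (\<lambda>y. Sf y a b) x" for a b
  define Gam where "Gam a b e = christoffel g a b e x" for a b e
  define ub where "ub y = (\<Sum>b\<in>UNIV. g y $ b $ c * u y $ b)" for y
  define W where "W y = h y * ub y" for y
  define N where "N = n x * h x"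
  have detx: "det (g x) \<noteq> 0" using det U by blast
  have Gsym: "\<And>i j. G i j = G j i" unfolding G_def using sym[OF U(2)] by (rule sym_entry)
  have Gisym: "\<And>i j. Gi i j = Gi j i" unfolding Gi_def using inv_sym_entry[OF detx sym[OF U(2)]] by blast
  have inv: "\<And>i j. (\<Sum>k\<in>UNIV. G i k * Gi k j) = (if i = j then 1 else 0)"
    unfolding G_def Gi_def by (rule inv_entry_sum(1)[OF detx])
  have dgsym: "\<And>k i j. dg k i j = dg k j i"
  proof -
    fix k i j
    have "\<And>y. y \<in> U \<Longrightarrow> g y $ i $ j = g y $ j $ i"
      using sym by (rule sym_entry)
    then show "dg k i j = dg k j i" unfolding dg_def by (rule pd_local[OF U])
  qed
  have Ssym: "\<And>i j. S i j = S j i" unfolding S_def Sf_def using Gisym unfolding Gi_def by (simp add: mult_ac)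
  have Gam: "\<And>a b e. Gam a b e = 1/2 * (\<Sum>d\<in>UNIV. Gi a d * (dg b d e + dg e d b - dg d b e))"
    unfolding Gam_def christoffel_def Gi_def dg_def by simp
  have Ed: "\<And>b. (\<Sum>a\<in>UNIV. dS a b) + (\<Sum>a\<in>UNIV. \<Sum>e\<in>UNIV. Gam a a e * S e b)
            + (\<Sum>a\<in>UNIV. \<Sum>e\<in>UNIV. Gam b a e * S a e) = 0"
    using eul unfolding cov_div_tensor_def dS_def Gam_def S_def Sf_def by simp
  then have "(\<Sum>b\<in>UNIV. G b c * ((\<Sum>a\<in>UNIV. dS a b) + (\<Sum>a\<in>UNIV. \<Sum>e\<in>UNIV. Gam a a e * S e b)
            + (\<Sum>a\<in>UNIV. \<Sum>e\<in>UNIV. Gam b a e * S a e))) = 0" by simp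
  then have main: "(\<Sum>a\<in>UNIV. \<Sum>b\<in>UNIV. G b c * dS a b + dg a b c * S a b)
     + (\<Sum>a\<in>UNIV. \<Sum>e\<in>UNIV. Gam a a e * (\<Sum>b\<in>UNIV. S e b * G b c))
     - 1/2 * (\<Sum>a\<in>UNIV. \<Sum>e\<in>UNIV. S a e * dg c a e) = 0"
    using alg_lower[OF Gsym inv dgsym Ssym Gam, where dS=dS and c=c] by simp
  have Gid: "\<And>i j. (\<lambda>y. matrix_inv (g y) $ i $ j) differentiable (at x)"
    by (rule inv_entry_diff[OF U det gd]) auto
  have Sfd: "\<And>a b. (\<lambda>y. Sf y a b) differentiable (at x)"
    unfolding Sf_def using nd hd Pd ud Gid by (intro differentiable_add differentiable_mult) auto
  have ubd: "ub differentiable (at x)"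
    unfolding ub_def using gd ud by (intro differentiable_sum differentiable_mult) auto
  have Wd: "W differentiable (at x)" unfolding W_def using hd ubd by (intro differentiable_mult)
  have nud: "\<And>a. (\<lambda>y. n y * u y $ a) differentiable (at x)" using nd ud by (intro differentiable_mult)
  have T1: "\<And>a. (\<Sum>b\<in>UNIV. G b c * dS a b + dg a b c * S a b)
      = (n x * u x $ a) * pd a W x + pd a (\<lambda>y. n y * u y $ a) x * W x + (if a = c then pd c P x else 0)"
  proof -
    fix a
    have "pd a (\<lambda>y. \<Sum>b\<in>UNIV. g y $ b $ c * Sf y a b) x = (\<Sum>b\<in>UNIV. pd a (\<lambda>y. g y $ b $ c * Sf y a b) x)"
      by (rule pd_sum) (auto intro: differentiable_mult gd Sfd)
    also have "\<dots> = (\<Sum>b\<in>UNIV. G b c * dS a b + dg a b c * S a b)"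
      by (rule sum.cong[OF refl]) (simp add: pd_mult[OF gd Sfd] G_def dS_def dg_def S_def)
    finally have "(\<Sum>b\<in>UNIV. G b c * dS a b + dg a b c * S a b) = pd a (\<lambda>y. \<Sum>b\<in>UNIV. g y $ b $ c * Sf y a b) x"
      by simp
    also have "\<dots> = pd a (\<lambda>y. (n y * u y $ a) * W y + P y * (if a = c then 1 else 0)) x"
    proof (rule pd_local[OF U])
      fix y assume y: "y \<in> U"
      have i2: "(\<Sum>b\<in>UNIV. matrix_inv (g y) $ a $ b * g y $ b $ c) = (if a = c then 1 else 0)"
        by (rule inv_entry_sum(2)[OF det[OF y]])
      have "(\<Sum>b\<in>UNIV. g y $ b $ c * Sf y a b)
         = (n y * h y * u y $ a) * (\<Sum>b\<in>UNIV. g y $ b $ c * u y $ b) + P y * (\<Sum>b\<in>UNIV. matrix_inv (g y) $ a $ b * g y $ b $ c)"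
        unfolding Sf_def by (simp add: sum_distrib_left sum.distrib algebra_simps)
      then show "(\<Sum>b\<in>UNIV. g y $ b $ c * Sf y a b) = (n y * u y $ a) * W y + P y * (if a = c then 1 else 0)"
        unfolding i2 W_def ub_def by (simp add: algebra_simps)
    qed
    also have "\<dots> = (n x * u x $ a) * pd a W x + pd a (\<lambda>y. n y * u y $ a) x * W x + (if a = c then pd c P x else 0)"
    proof (cases "a = c")
      case True
      then show ?thesis using pd_add[OF differentiable_mult[OF nud Wd] Pd] pd_mult[OF nud Wd] by simp
    next
      case False
      then show ?thesis using pd_mult[OF nud Wd] by simp
    qed
    finally show "(\<Sum>b\<in>UNIV. G b c * dS a b + dg a b c * S a b)
      = (n x * u x $ a) * pd a W x + pd a (\<lambda>y. n y * u y $ a) x * W x + (if a = c then pd c P x else 0)" .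
  qed
  have T1s: "(\<Sum>a\<in>UNIV. \<Sum>b\<in>UNIV. G b c * dS a b + dg a b c * S a b)
      = n x * (\<Sum>a\<in>UNIV. u x $ a * pd a W x) + W x * (\<Sum>a\<in>UNIV. pd a (\<lambda>y. n y * u y $ a) x) + pd c P x"
  proof -
    have "(\<Sum>a\<in>UNIV. \<Sum>b\<in>UNIV. G b c * dS a b + dg a b c * S a b)
       = (\<Sum>a\<in>UNIV. (n x * u x $ a) * pd a W x + pd a (\<lambda>y. n y * u y $ a) x * W x + (if a = c then pd c P x else 0))"
      by (simp only: T1)
    also have "\<dots> = (\<Sum>a\<in>UNIV. (n x * u x $ a) * pd a W x) + (\<Sum>a\<in>UNIV. pd a (\<lambda>y. n y * u y $ a) x * W x)
        + (\<Sum>a\<in>UNIV. (if a = c then pd c P x else 0))"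
      by (simp only: sum.distrib)
    also have "(\<Sum>a\<in>UNIV. (n x * u x $ a) * pd a W x) = n x * (\<Sum>a\<in>UNIV. u x $ a * pd a W x)"
      by (simp add: sum_distrib_left mult.assoc)
    also have "(\<Sum>a\<in>UNIV. pd a (\<lambda>y. n y * u y $ a) x * W x) = W x * (\<Sum>a\<in>UNIV. pd a (\<lambda>y. n y * u y $ a) x)"
      by (simp add: sum_distrib_left mult.commute)
    also have "(\<Sum>a\<in>UNIV. (if a = c then pd c P x else 0)) = pd c P x"
      by simp
    finally show ?thesis .
  qed
  have SG: "\<And>e. (\<Sum>b\<in>UNIV. S e b * G b c) = N * u x $ e * ub x + P x * (if e = c then 1 else 0)"
  proof -
    fix e
    have i2: "(\<Sum>b\<in>UNIV. Gi e b * G b c) = (if e = c then 1 else 0)"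
      unfolding Gi_def G_def by (rule inv_entry_sum(2)[OF detx])
    have "(\<Sum>b\<in>UNIV. S e b * G b c) = N * u x $ e * ub x + P x * (\<Sum>b\<in>UNIV. Gi e b * G b c)"
      unfolding S_def Sf_def N_def ub_def G_def Gi_def
      by (simp add: sum_distrib_left sum.distrib algebra_simps)
    then show "(\<Sum>b\<in>UNIV. S e b * G b c) = N * u x $ e * ub x + P x * (if e = c then 1 else 0)"
      unfolding i2 .
  qed
  have GamC: "(\<Sum>a\<in>UNIV. Gam a a c) = 1/2 * (\<Sum>a\<in>UNIV. \<Sum>d\<in>UNIV. Gi a d * dg c a d)"
    using alg_contracted[OF Gisym Gam, of c] dgsym by simp
  have T2: "(\<Sum>a\<in>UNIV. \<Sum>e\<in>UNIV. Gam a a e * (\<Sum>b\<in>UNIV. S e b * G b c))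
     = W x * (\<Sum>a\<in>UNIV. \<Sum>e\<in>UNIV. Gam a a e * (n x * u x $ e)) + P x * (1/2 * (\<Sum>a\<in>UNIV. \<Sum>d\<in>UNIV. Gi a d * dg c a d))"
  proof -
    have "(\<Sum>a\<in>UNIV. \<Sum>e\<in>UNIV. Gam a a e * (\<Sum>b\<in>UNIV. S e b * G b c))
       = (\<Sum>a\<in>UNIV. \<Sum>e\<in>UNIV. W x * (Gam a a e * (n x * u x $ e)) + (if e = c then P x * Gam a a e else 0))"
      unfolding SG W_def N_def by (intro sum.cong refl) (simp add: algebra_simps)
    also have "\<dots> = (\<Sum>a\<in>UNIV. \<Sum>e\<in>UNIV. W x * (Gam a a e * (n x * u x $ e))) + (\<Sum>a\<in>UNIV. \<Sum>e\<in>UNIV. (if e = c then P x * Gam a a e else 0))"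
      by (simp only: sum.distrib)
    also have "\<dots> = W x * (\<Sum>a\<in>UNIV. \<Sum>e\<in>UNIV. Gam a a e * (n x * u x $ e)) + P x * (\<Sum>a\<in>UNIV. Gam a a c)"
      by (simp add: sum_distrib_left)
    finally show ?thesis unfolding GamC .
  qed
  have T3: "(\<Sum>a\<in>UNIV. \<Sum>e\<in>UNIV. S a e * dg c a e)
     = N * (\<Sum>a\<in>UNIV. \<Sum>e\<in>UNIV. u x $ a * u x $ e * dg c a e) + P x * (\<Sum>a\<in>UNIV. \<Sum>d\<in>UNIV. Gi a d * dg c a d)"
  proof -
    have "\<And>a e. S a e * dg c a e = N * (u x $ a * u x $ e * dg c a e) + P x * (Gi a e * dg c a e)"
      by (simp add: S_def Sf_def N_def Gi_def algebra_simps)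
    then show ?thesis by (simp add: sum.distrib sum_distrib_left)
  qed
  have C: "(\<Sum>a\<in>UNIV. pd a (\<lambda>y. n y * u y $ a) x) + (\<Sum>a\<in>UNIV. \<Sum>e\<in>UNIV. Gam a a e * (n x * u x $ e)) = 0"
    using cont unfolding cov_div_vec_def Gam_def by simp
  have "n x * (\<Sum>a\<in>UNIV. u x $ a * pd a W x) + pd c P x
         - 1/2 * N * (\<Sum>a\<in>UNIV. \<Sum>e\<in>UNIV. u x $ a * u x $ e * dg c a e)
       = W x * ((\<Sum>a\<in>UNIV. pd a (\<lambda>y. n y * u y $ a) x) + (\<Sum>a\<in>UNIV. \<Sum>e\<in>UNIV. Gam a a e * (n x * u x $ e)))
         + n x * (\<Sum>a\<in>UNIV. u x $ a * pd a W x) + pd c P x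
         - 1/2 * N * (\<Sum>a\<in>UNIV. \<Sum>e\<in>UNIV. u x $ a * u x $ e * dg c a e)"
    using C by simp
  also have "\<dots> = 0" using main unfolding T1s T2 T3 by algebra
  finally show ?thesis unfolding W_def ub_def N_def dg_def by simp
qed

lemma jacobi_pd:
  fixes g :: "real^'n::finite \<Rightarrow> real^'n^'n"
  assumes det: "det (g x) \<noteq> 0" and gd: "\<And>i j. (\<lambda>y. g y $ i $ j) differentiable (at x)"
  shows "pd k (\<lambda>y. det (g y)) x = det (g x) * (\<Sum>i\<in>UNIV. \<Sum>l\<in>UNIV. pd k (\<lambda>y. g y $ i $ l) x * matrix_inv (g x) $ l $ i)"
proof -
  have D: "\<And>i j. ((\<lambda>y. g y $ i $ j) has_derivative frechet_derivative (\<lambda>y. g y $ i $ j) (at x)) (at x)"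
    using gd frechet_derivative_works by blast
  have "pd k (\<lambda>y. det (g y)) x = (\<Sum>p\<in>{p. p permutes (UNIV::'n set)}.
      of_int (sign p) * (\<Sum>i\<in>UNIV. frechet_derivative (\<lambda>y. g y $ i $ (p i)) (at x) (axis k 1) * (\<Prod>j\<in>UNIV-{i}. g x $ j $ p j)))"
    by (rule pd_eq[OF has_derivative_det[OF D]])
  also have "\<dots> = (\<Sum>p\<in>{p. p permutes (UNIV::'n set)}.
      of_int (sign p) * (\<Sum>i\<in>UNIV. (\<chi> i l. pd k (\<lambda>y. g y $ i $ l) x) $ i $ (p i) * (\<Prod>j\<in>UNIV-{i}. g x $ j $ p j)))"
    by (simp add: pd_def dderiv_def)
  also have "\<dots> = det (g x) * (\<Sum>i\<in>UNIV. \<Sum>l\<in>UNIV. (\<chi> i l. pd k (\<lambda>y. g y $ i $ l) x) $ i $ l * matrix_inv (g x) $ l $ i)"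
    by (rule jacobi_alg[OF det])
  finally show ?thesis by simp
qed

lemma two_sum:
  fixes F :: "'n::finite \<Rightarrow> real"
  assumes "tau \<noteq> lam" "\<And>k. k \<noteq> tau \<Longrightarrow> k \<noteq> lam \<Longrightarrow> F k = 0"
  shows "(\<Sum>k\<in>UNIV. F k) = F tau + F lam"
proof -
  have "(\<Sum>k\<in>UNIV. F k) = (\<Sum>k\<in>{tau, lam}. F k)"
    by (rule sum.mono_neutral_right) (use assms in auto)
  then show ?thesis using assms(1) by simp
qed

locale fluid =
  fixes U :: "(real^'n::finite) set" and p :: "real^'n" and tau lam :: 'n
    and g :: "real^'n \<Rightarrow> real^'n^'n" and u :: "real^'n \<Rightarrow> real^'n"
    and n h P s T v :: "real^'n \<Rightarrow> real" and H :: "real \<times> real \<Rightarrow> real"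
    and \<gamma> :: "real \<Rightarrow> real^'n" and I :: "real set" and \<sigma>0 :: real
  assumes U_open: "open U" and p_in: "p \<in> U" and tau_lam: "tau \<noteq> lam"
    and lorentz: "\<forall>x\<in>U. lorentzian_matrix (g x)"
    and g_C2: "\<forall>i j. C2_on U (\<lambda>x. g x $ i $ j)"
    and killing: "\<forall>x\<in>U. \<forall>i j. pd tau (\<lambda>y. g y $ i $ j) x = 0"
    and timelike: "\<forall>x\<in>U. g x $ tau $ tau < 0"
    and eta_unit: "\<forall>x\<in>U. g x $ lam $ lam = 1"
    and eta_orth: "\<forall>x\<in>U. g x $ tau $ lam = 0"
    and pos: "\<forall>x\<in>U. n x > 0 \<and> h x > 0 \<and> P x > 0 \<and> s x > 0 \<and> T x > 0"
    and reg: "C2_on U n" "C2_on U h" "C2_on U P" "C2_on U s" "C2_on U T"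
             "\<forall>i. C2_on U (\<lambda>x. u x $ i)"
    and unit_u: "\<forall>x\<in>U. u x \<bullet> (g x *v u x) = -1"
    and first_law: "\<forall>x\<in>U. \<forall>k. pd k h x = T x * pd k s x + pd k P x / n x"
    and continuity: "\<forall>x\<in>U. cov_div_vec g (\<lambda>y. n y *\<^sub>R u y) x = 0"
    and euler: "\<forall>x\<in>U. \<forall>b. cov_div_tensor g
        (\<lambda>y. \<chi> a c. n y * h y * (u y $ a) * (u y $ c) + P y * matrix_inv (g y) $ a $ c) b x = 0"
    and eos_C2: "C2_on ({0<..} \<times> {0<..}) H"
    and eos: "\<forall>m>0. \<forall>\<sigma>>0. H (m, \<sigma>) > 0 \<and> 0 < sound_speed_sq H m \<sigma> \<and> sound_speed_sq H m \<sigma> < 1"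
    and h_eos: "\<forall>x\<in>U. h x = H (n x, s x)"
    and steady: "\<forall>x\<in>U. pd tau P x = 0 \<and> pd tau s x = 0 \<and> (\<forall>i. pd tau (\<lambda>y. u y $ i) x = 0)"
    and velocity: "\<forall>x\<in>U. 0 \<le> v x \<and> v x < 1 \<and>
        u x = (1 / sqrt (1 - (v x)^2)) *\<^sub>R ((1 / sqrt \<bar>g x $ tau $ tau\<bar>) *\<^sub>R axis tau 1 + v x *\<^sub>R axis lam 1)"
    and I_open: "open I" and I_interval: "is_interval I"
    and worldline: "\<forall>\<sigma>\<in>I. \<gamma> \<sigma> \<in> U \<and> (\<gamma> has_vector_derivative u (\<gamma> \<sigma>)) (at \<sigma>)"
    and \<sigma>0_in: "\<sigma>0 \<in> I" and through_p: "\<gamma> \<sigma>0 = p"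
begin

lemma gsym: "y \<in> U \<Longrightarrow> g y = transpose (g y)"
  using lorentz unfolding lorentzian_matrix_def by blast

lemma gsym_e: "y \<in> U \<Longrightarrow> g y $ i $ j = g y $ j $ i"
  using gsym sym_entry by blast

lemma gdet: "y \<in> U \<Longrightarrow> det (g y) \<noteq> 0"
  using lorentz lorentz_det by blast

lemma gd: "y \<in> U \<Longrightarrow> (\<lambda>x. g x $ i $ j) differentiable (at y)"
  using g_C2 C2_diff U_open by blast

lemma gpdd: "y \<in> U \<Longrightarrow> pd k (\<lambda>x. g x $ i $ j) differentiable (at y)"
  using g_C2 C2_pd_diff U_open by blast

lemma nd: "y \<in> U \<Longrightarrow> n differentiable (at y)" using reg(1) C2_diff U_open by blast
lemma hd: "y \<in> U \<Longrightarrow> h differentiable (at y)" using reg(2) C2_diff U_open by blast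
lemma Pd: "y \<in> U \<Longrightarrow> P differentiable (at y)" using reg(3) C2_diff U_open by blast
lemma sd: "y \<in> U \<Longrightarrow> s differentiable (at y)" using reg(4) C2_diff U_open by blast
lemma ud: "y \<in> U \<Longrightarrow> (\<lambda>x. u x $ i) differentiable (at y)" using reg(6) C2_diff U_open by blast
lemma npdd: "y \<in> U \<Longrightarrow> pd k n differentiable (at y)" using reg(1) C2_pd_diff U_open by blast
lemma hpdd: "y \<in> U \<Longrightarrow> pd k h differentiable (at y)" using reg(2) C2_pd_diff U_open by blast
lemma spdd: "y \<in> U \<Longrightarrow> pd k s differentiable (at y)" using reg(4) C2_pd_diff U_open by blast
lemma updd: "y \<in> U \<Longrightarrow> pd k (\<lambda>x. u x $ i) differentiable (at y)" using reg(6) C2_pd_diff U_open by blast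

lemma u_other: "y \<in> U \<Longrightarrow> k \<noteq> tau \<Longrightarrow> k \<noteq> lam \<Longrightarrow> u y $ k = 0"
  using velocity by (simp add: axis_def)

lemma u_tau: "y \<in> U \<Longrightarrow> u y $ tau = 1 / sqrt (1 - (v y)^2) * (1 / sqrt \<bar>g y $ tau $ tau\<bar>)"
  using velocity tau_lam by (simp add: axis_def)

lemma u_lam: "y \<in> U \<Longrightarrow> u y $ lam = 1 / sqrt (1 - (v y)^2) * v y"
  using velocity tau_lam by (simp add: axis_def)

lemma norm_u: "y \<in> U \<Longrightarrow> g y $ tau $ tau * (u y $ tau * u y $ tau) + u y $ lam * u y $ lam = -1"
proof -
  assume y: "y \<in> U"
  define a where "a = g y $ tau $ tau"
  define vv where "vv = v y"
  have a: "a < 0" using timelike y a_def by blast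
  have v: "0 \<le> vv" "vv < 1" using velocity y vv_def by auto
  have "vv * vv \<le> vv * 1" using v by (intro mult_left_mono) auto
  then have q: "1 - vv^2 > 0" using v by (simp add: power2_eq_square)
  have X: "u y $ tau * u y $ tau = 1 / (1 - vv^2) * (1 / \<bar>a\<bar>)"
    using u_tau[OF y] q a unfolding a_def[symmetric] vv_def[symmetric]
    by (simp add: power2_eq_square[symmetric] power_mult_distrib real_sqrt_pow2 power_divide)
  have Y: "u y $ lam * u y $ lam = vv^2 / (1 - vv^2)"
    using u_lam[OF y] q unfolding vv_def[symmetric]
    by (simp add: power2_eq_square[symmetric] power_mult_distrib real_sqrt_pow2 power_divide)
  have e1: "a * (u y $ tau * u y $ tau) = -1 / (1 - vv^2)"
    unfolding X using a q by (simp add: abs_of_neg field_simps)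
  have e3: "-1 / (1 - vv^2) + vv^2 / (1 - vv^2) = -1"
  proof -
    have "-1 / (1 - vv^2) + vv^2 / (1 - vv^2) = (-(1 - vv^2)) / (1 - vv^2)"
      by (simp add: diff_divide_distrib add_divide_distrib)
    also have "\<dots> = -1" using q by (simp add: divide_eq_eq)
    finally show ?thesis .
  qed
  show ?thesis unfolding a_def[symmetric] using e1 Y e3 by linarith
qed

lemma dir_two: "y \<in> U \<Longrightarrow> (\<Sum>k\<in>UNIV. u y $ k * F k) = u y $ tau * F tau + u y $ lam * F lam"
  by (rule two_sum[OF tau_lam]) (simp add: u_other)

end

context fluid begin

lemma quad_open: "open ({0<..} \<times> {0<..} :: (real \<times> real) set)"
  by (intro open_Times open_greaterThan)

lemma Hd: "m > 0 \<Longrightarrow> \<sigma> > 0 \<Longrightarrow> H differentiable (at (m, \<sigma>))"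
  using C2_diff[OF eos_C2 quad_open] by auto

lemma H_lin: "m > 0 \<Longrightarrow> \<sigma> > 0 \<Longrightarrow>
  frechet_derivative H (at (m, \<sigma>)) (a, b) = a * dderiv (1, 0) H (m, \<sigma>) + b * dderiv (0, 1) H (m, \<sigma>)"
proof -
  assume m: "m > 0" "\<sigma> > 0"
  have "linear (frechet_derivative H (at (m, \<sigma>)))"
    using Hd[OF m] frechet_derivative_works has_derivative_linear by blast
  then have lin: "linear (frechet_derivative H (at (m, \<sigma>)))" .
  have "frechet_derivative H (at (m, \<sigma>)) (a, b) = frechet_derivative H (at (m, \<sigma>)) (a *\<^sub>R (1, 0) + b *\<^sub>R (0::real, 1::real))"
    by simp
  also have "\<dots> = a * frechet_derivative H (at (m, \<sigma>)) (1, 0) + b * frechet_derivative H (at (m, \<sigma>)) (0, 1)"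
    by (simp only: linear_add[OF lin] linear_scale[OF lin] real_scaleR_def)
  finally have "frechet_derivative H (at (m, \<sigma>)) (a, b) =
      a * frechet_derivative H (at (m, \<sigma>)) (1, 0) + b * frechet_derivative H (at (m, \<sigma>)) (0, 1)" .
  then show ?thesis unfolding dderiv_def .
qed

lemma pd_h_chain:
  assumes x: "x \<in> U"
  shows "pd k h x = pd k n x * dderiv (1, 0) H (n x, s x) + pd k s x * dderiv (0, 1) H (n x, s x)"
proof -
  have nx: "n x > 0" "s x > 0" using pos x by auto
  have "pd k h x = pd k (\<lambda>y. H (n y, s y)) x"
    by (rule pd_local[OF U_open x]) (simp add: h_eos)
  also have "\<dots> = frechet_derivative H (at (n x, s x)) (pd k n x, pd k s x)"
  proof -
    have Dn: "(n has_derivative frechet_derivative n (at x)) (at x)" using nd[OF x] frechet_derivative_works by blast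
    have Ds: "(s has_derivative frechet_derivative s (at x)) (at x)" using sd[OF x] frechet_derivative_works by blast
    have DH: "(H has_derivative frechet_derivative H (at (n x, s x))) (at (n x, s x))"
      using Hd[OF nx] frechet_derivative_works by blast
    have "((\<lambda>y. (n y, s y)) has_derivative (\<lambda>w. (frechet_derivative n (at x) w, frechet_derivative s (at x) w))) (at x)"
      by (rule has_derivative_Pair[OF Dn Ds])
    from has_derivative_compose[OF this DH]
    have "pd k (\<lambda>y. H (n y, s y)) x = frechet_derivative H (at (n x, s x))
       (frechet_derivative n (at x) (axis k 1), frechet_derivative s (at x) (axis k 1))"
      by (rule pd_eq)
    then show ?thesis by (simp add: pd_def dderiv_def)
  qed
  also have "\<dots> = pd k n x * dderiv (1, 0) H (n x, s x) + pd k s x * dderiv (0, 1) H (n x, s x)"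
    by (rule H_lin[OF nx])
  finally show ?thesis .
qed

lemma H1_pos: "x \<in> U \<Longrightarrow> dderiv (1, 0) H (n x, s x) > 0"
proof -
  assume x: "x \<in> U"
  have nx: "n x > 0" "s x > 0" using pos x by auto
  have "H (n x, s x) > 0" "sound_speed_sq H (n x) (s x) > 0" using eos nx by auto
  then show ?thesis using nx unfolding sound_speed_sq_def
    by (simp add: zero_less_divide_iff zero_less_mult_iff)
qed

lemma pdt_g: "x \<in> U \<Longrightarrow> pd tau (\<lambda>y. g y $ i $ j) x = 0" using killing by blast
lemma pdt_P: "x \<in> U \<Longrightarrow> pd tau P x = 0" using steady by blast
lemma pdt_s: "x \<in> U \<Longrightarrow> pd tau s x = 0" using steady by blast
lemma pdt_u: "x \<in> U \<Longrightarrow> pd tau (\<lambda>y. u y $ i) x = 0" using steady by blast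
lemma pdt_h: "x \<in> U \<Longrightarrow> pd tau h x = 0" using first_law pdt_P pdt_s by simp
lemma pdt_n: "x \<in> U \<Longrightarrow> pd tau n x = 0"
proof -
  assume x: "x \<in> U"
  have "pd tau n x * dderiv (1, 0) H (n x, s x) = 0"
    using pd_h_chain[OF x, of tau] pdt_h[OF x] pdt_s[OF x] by simp
  then show ?thesis using H1_pos[OF x] by simp
qed

definition Wt where "Wt y = h y * (g y $ tau $ tau * u y $ tau)"

lemma Wt_local: "y \<in> U \<Longrightarrow> h y * (\<Sum>b\<in>UNIV. g y $ b $ tau * u y $ b) = Wt y"
proof -
  assume y: "y \<in> U"
  have "(\<Sum>b\<in>UNIV. g y $ b $ tau * u y $ b) = g y $ tau $ tau * u y $ tau + g y $ lam $ tau * u y $ lam"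
    by (rule two_sum[OF tau_lam]) (simp add: u_other[OF y])
  also have "g y $ lam $ tau = 0" using gsym_e[OF y, of lam tau] eta_orth y by simp
  finally show ?thesis unfolding Wt_def by simp
qed

lemma Wl_local: "y \<in> U \<Longrightarrow> h y * (\<Sum>b\<in>UNIV. g y $ b $ lam * u y $ b) = h y * u y $ lam"
proof -
  assume y: "y \<in> U"
  have "(\<Sum>b\<in>UNIV. g y $ b $ lam * u y $ b) = g y $ tau $ lam * u y $ tau + g y $ lam $ lam * u y $ lam"
    by (rule two_sum[OF tau_lam]) (simp add: u_other[OF y])
  also have "g y $ tau $ lam = 0" using eta_orth y by simp
  also have "g y $ lam $ lam = 1" using eta_unit y by simp
  finally show ?thesis by simp
qed

lemma euler_c:
  assumes x: "x \<in> U"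
  shows "n x * (\<Sum>a\<in>UNIV. u x $ a * pd a (\<lambda>y. h y * (\<Sum>b\<in>UNIV. g y $ b $ c * u y $ b)) x) + pd c P x
         - 1/2 * (n x * h x) * (\<Sum>a\<in>UNIV. \<Sum>e\<in>UNIV. u x $ a * u x $ e * pd c (\<lambda>y. g y $ a $ e) x) = 0"
proof (rule euler_lowered[OF U_open x])
  show "\<And>y. y \<in> U \<Longrightarrow> g y = transpose (g y)" by (rule gsym)
  show "\<And>y. y \<in> U \<Longrightarrow> det (g y) \<noteq> 0" by (rule gdet)
  show "\<And>i j. (\<lambda>y. g y $ i $ j) differentiable (at x)" by (rule gd[OF x])
  show "n differentiable (at x)" by (rule nd[OF x])
  show "h differentiable (at x)" by (rule hd[OF x])
  show "P differentiable (at x)" by (rule Pd[OF x])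
  show "\<And>i. (\<lambda>y. u y $ i) differentiable (at x)" by (rule ud[OF x])
  show "cov_div_vec g (\<lambda>y. n y *\<^sub>R u y) x = 0" using continuity x by blast
  show "\<And>b. cov_div_tensor g (\<lambda>y. \<chi> a c. n y * h y * u y $ a * u y $ c + P y * matrix_inv (g y) $ a $ c) b x = 0"
    using euler x by blast
qed

lemma Du_Wt: "x \<in> U \<Longrightarrow> (\<Sum>a\<in>UNIV. u x $ a * pd a Wt x) = 0"
proof -
  assume x: "x \<in> U"
  have pdW: "\<And>a. pd a (\<lambda>y. h y * (\<Sum>b\<in>UNIV. g y $ b $ tau * u y $ b)) x = pd a Wt x"
    by (rule pd_local[OF U_open x]) (rule Wt_local)
  have "n x * (\<Sum>a\<in>UNIV. u x $ a * pd a Wt x) = 0"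
    using euler_c[OF x, of tau] unfolding pdW by (simp add: pdt_g[OF x] pdt_P[OF x])
  moreover have "n x > 0" using pos x by blast
  ultimately show ?thesis by simp
qed

lemma Wt_eq: "Wt = (\<lambda>y. h y * (g y $ tau $ tau * u y $ tau))"
  by (simp add: Wt_def fun_eq_iff)

lemma gtu_d: "x \<in> U \<Longrightarrow> (\<lambda>y. g y $ tau $ tau * u y $ tau) differentiable (at x)"
  using gd ud by (intro differentiable_mult) auto

lemma pd_Wt: "x \<in> U \<Longrightarrow> pd k Wt x = h x * (g x $ tau $ tau * pd k (\<lambda>y. u y $ tau) x
     + pd k (\<lambda>y. g y $ tau $ tau) x * u x $ tau) + pd k h x * (g x $ tau $ tau * u x $ tau)"
  unfolding Wt_eq
  by (simp add: pd_mult[OF hd gtu_d] pd_mult[OF gd ud])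

lemma pdt_Wt: "x \<in> U \<Longrightarrow> pd tau Wt x = 0"
  by (simp add: pd_Wt pdt_h pdt_g pdt_u)

lemma lam_Wt: "x \<in> U \<Longrightarrow> u x $ lam * pd lam Wt x = 0"
  using Du_Wt[of x] dir_two[of x "\<lambda>a. pd a Wt x"] pdt_Wt[of x] by simp

lemma pdl_consts:
  assumes x: "x \<in> U"
  shows "pd lam (\<lambda>y. g y $ tau $ lam) x = 0" "pd lam (\<lambda>y. g y $ lam $ tau) x = 0"
    "pd lam (\<lambda>y. g y $ lam $ lam) x = 0"
proof -
  show "pd lam (\<lambda>y. g y $ tau $ lam) x = 0"
    by (rule pd_local_const[OF U_open x, where c=0]) (use eta_orth in blast)
  show "pd lam (\<lambda>y. g y $ lam $ tau) x = 0"
    by (rule pd_local_const[OF U_open x, where c=0]) (use eta_orth gsym_e in metis)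
  show "pd lam (\<lambda>y. g y $ lam $ lam) x = 0"
    by (rule pd_local_const[OF U_open x, where c=1]) (use eta_unit in blast)
qed

lemma uu_sum:
  assumes x: "x \<in> U"
  shows "(\<Sum>a\<in>UNIV. \<Sum>e\<in>UNIV. u x $ a * u x $ e * X a e) =
     u x $ tau * (u x $ tau * X tau tau + u x $ lam * X tau lam) + u x $ lam * (u x $ tau * X lam tau + u x $ lam * X lam lam)"
proof -
  have "(\<Sum>a\<in>UNIV. \<Sum>e\<in>UNIV. u x $ a * u x $ e * X a e) = (\<Sum>a\<in>UNIV. u x $ a * (\<Sum>e\<in>UNIV. u x $ e * X a e))"
    by (simp add: sum_distrib_left mult.assoc)
  also have "\<dots> = (\<Sum>a\<in>UNIV. u x $ a * (u x $ tau * X a tau + u x $ lam * X a lam))"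
    by (simp add: dir_two[OF x])
  also have "\<dots> = u x $ tau * (u x $ tau * X tau tau + u x $ lam * X tau lam) + u x $ lam * (u x $ tau * X lam tau + u x $ lam * X lam lam)"
    by (rule dir_two[OF x])
  finally show ?thesis .
qed

lemma Du_s: "x \<in> U \<Longrightarrow> (\<Sum>a\<in>UNIV. u x $ a * pd a s x) = 0"
proof -
  assume x: "x \<in> U"
  define A where "A = g x $ tau $ tau"
  define w where "w = u x $ tau"
  define l where "l = u x $ lam"
  define Ap where "Ap = pd lam (\<lambda>y. g y $ tau $ tau) x"
  define wp where "wp = pd lam (\<lambda>y. u y $ tau) x"
  define lp where "lp = pd lam (\<lambda>y. u y $ lam) x"
  define hp where "hp = pd lam h x"
  define Pp where "Pp = pd lam P x"
  define sp where "sp = pd lam s x"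
  have nx: "n x > 0" and Tx: "T x > 0" using pos x by auto
  have E1: "l * (h x * (A * wp + Ap * w) + hp * (A * w)) = 0"
    using lam_Wt[OF x] unfolding pd_Wt[OF x] A_def w_def l_def Ap_def wp_def hp_def .
  have pdWl: "\<And>a. pd a (\<lambda>y. h y * (\<Sum>b\<in>UNIV. g y $ b $ lam * u y $ b)) x = pd a (\<lambda>y. h y * u y $ lam) x"
    by (rule pd_local[OF U_open x]) (rule Wl_local)
  have hl: "\<And>k. pd k (\<lambda>y. h y * u y $ lam) x = h x * pd k (\<lambda>y. u y $ lam) x + pd k h x * u x $ lam"
    by (rule pd_mult[OF hd[OF x] ud[OF x]])
  have S1: "(\<Sum>a\<in>UNIV. u x $ a * pd a (\<lambda>y. h y * u y $ lam) x) = l * (h x * lp + hp * l)"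
    unfolding dir_two[OF x] hl using pdt_u[OF x] pdt_h[OF x] by (simp add: l_def lp_def hp_def)
  have S2: "(\<Sum>a\<in>UNIV. \<Sum>e\<in>UNIV. u x $ a * u x $ e * pd lam (\<lambda>y. g y $ a $ e) x) = w * w * Ap"
    unfolding uu_sum[OF x] using pdl_consts[OF x] by (simp add: w_def Ap_def)
  have E2: "n x * (l * (h x * lp + hp * l)) + Pp - 1/2 * (n x * h x) * (w * w * Ap) = 0"
    using euler_c[OF x, of lam] unfolding pdWl S1 S2 Pp_def .
  have N0: "A * (w * w) + l * l = -1" using norm_u[OF x] unfolding A_def w_def l_def .
  have N1: "A * (w * wp + wp * w) + Ap * (w * w) + (l * lp + lp * l) = 0"
  proof -
    have "pd lam (\<lambda>y. g y $ tau $ tau * (u y $ tau * u y $ tau) + u y $ lam * u y $ lam) x = 0"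
      by (rule pd_local_const[OF U_open x, where c="-1"]) (rule norm_u)
    moreover have "pd lam (\<lambda>y. g y $ tau $ tau * (u y $ tau * u y $ tau) + u y $ lam * u y $ lam) x
       = A * (w * wp + wp * w) + Ap * (w * w) + (l * lp + lp * l)"
      unfolding A_def w_def l_def Ap_def wp_def lp_def
      by (simp add: pd_add pd_mult gd[OF x] ud[OF x] differentiable_mult)
    ultimately show ?thesis by simp
  qed
  have FL: "hp = T x * sp + Pp / n x" using first_law x unfolding hp_def sp_def Pp_def by blast
  have key: "l * (Pp - n x * hp) = 0"
    using E1 E2 N0 N1 by algebra
  have "Pp - n x * hp = - (n x * T x * sp)" unfolding FL using nx by (simp add: algebra_simps)
  then have "l * (n x * T x * sp) = 0" using key by simp
  then have "l * sp = 0" using nx Tx by simp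
  then show ?thesis unfolding dir_two[OF x] using pdt_s[OF x] by (simp add: l_def sp_def)
qed

definition Q where "Q y = det (g y) * ((n y * u y $ lam) * (n y * u y $ lam))"

lemma Q_eq: "Q = (\<lambda>y. det (g y) * ((n y * u y $ lam) * (n y * u y $ lam)))"
  by (simp add: Q_def fun_eq_iff)

lemma detd: "x \<in> U \<Longrightarrow> (\<lambda>y. det (g y)) differentiable (at x)"
  by (rule det_differentiable) (rule gd)

lemma nld: "x \<in> U \<Longrightarrow> (\<lambda>y. n y * u y $ a) differentiable (at x)"
  using nd ud by (intro differentiable_mult) auto

lemma contr_gam:
  assumes x: "x \<in> U"
  shows "(\<Sum>a\<in>UNIV. christoffel g a a b x) * det (g x) = 1/2 * pd b (\<lambda>y. det (g y)) x"
proof -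
  define Gi where "Gi i j = matrix_inv (g x) $ i $ j" for i j
  define dg where "dg k i j = pd k (\<lambda>y. g y $ i $ j) x" for k i j
  have detx: "det (g x) \<noteq> 0" by (rule gdet[OF x])
  have Gisym: "\<And>i j. Gi i j = Gi j i" unfolding Gi_def using inv_sym_entry[OF detx gsym[OF x]] by blast
  have Gam: "\<And>a b e. christoffel g a b e x = 1/2 * (\<Sum>d\<in>UNIV. Gi a d * (dg b d e + dg e d b - dg d b e))"
    unfolding christoffel_def Gi_def dg_def by simp
  have "(\<Sum>a\<in>UNIV. christoffel g a a b x) = 1/2 * (\<Sum>a\<in>UNIV. \<Sum>d\<in>UNIV. Gi a d * dg b d a)"
    by (rule alg_contracted[OF Gisym Gam])
  also have "(\<Sum>a\<in>UNIV. \<Sum>d\<in>UNIV. Gi a d * dg b d a) = (\<Sum>d\<in>UNIV. \<Sum>a\<in>UNIV. Gi a d * dg b d a)"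
    by (rule sum.swap)
  also have "\<dots> = (\<Sum>i\<in>UNIV. \<Sum>l\<in>UNIV. pd b (\<lambda>y. g y $ i $ l) x * matrix_inv (g x) $ l $ i)"
    unfolding Gi_def dg_def by (simp add: mult.commute)
  finally have "(\<Sum>a\<in>UNIV. christoffel g a a b x) = 1/2 * (\<Sum>i\<in>UNIV. \<Sum>l\<in>UNIV. pd b (\<lambda>y. g y $ i $ l) x * matrix_inv (g x) $ l $ i)" .
  moreover have "pd b (\<lambda>y. det (g y)) x = det (g x) * (\<Sum>i\<in>UNIV. \<Sum>l\<in>UNIV. pd b (\<lambda>y. g y $ i $ l) x * matrix_inv (g x) $ l $ i)"
    by (rule jacobi_pd[OF detx gd[OF x]])
  ultimately show ?thesis by simp
qed

lemma pdt_det: "x \<in> U \<Longrightarrow> pd tau (\<lambda>y. det (g y)) x = 0"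
proof -
  assume x: "x \<in> U"
  have "pd tau (\<lambda>y. det (g y)) x = det (g x) * (\<Sum>i\<in>UNIV. \<Sum>l\<in>UNIV. pd tau (\<lambda>y. g y $ i $ l) x * matrix_inv (g x) $ l $ i)"
    by (rule jacobi_pd[OF gdet[OF x] gd[OF x]])
  then show ?thesis using pdt_g[OF x] by simp
qed

lemma cont_lam:
  assumes x: "x \<in> U"
  shows "2 * det (g x) * pd lam (\<lambda>y. n y * u y $ lam) x + pd lam (\<lambda>y. det (g y)) x * (n x * u x $ lam) = 0"
proof -
  have C: "(\<Sum>a\<in>UNIV. pd a (\<lambda>y. n y * u y $ a) x) + (\<Sum>a\<in>UNIV. \<Sum>b\<in>UNIV. christoffel g a a b x * (n x * u x $ b)) = 0"
    using continuity x unfolding cov_div_vec_def by simp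
  have s1: "(\<Sum>a\<in>UNIV. pd a (\<lambda>y. n y * u y $ a) x) = pd tau (\<lambda>y. n y * u y $ tau) x + pd lam (\<lambda>y. n y * u y $ lam) x"
  proof (rule two_sum[OF tau_lam])
    fix k assume "k \<noteq> tau" "k \<noteq> lam"
    then show "pd k (\<lambda>y. n y * u y $ k) x = 0"
      by (intro pd_local_const[OF U_open x, where c=0]) (simp add: u_other)
  qed
  have s1t: "pd tau (\<lambda>y. n y * u y $ tau) x = 0"
    by (simp add: pd_mult[OF nd[OF x] ud[OF x]] pdt_n[OF x] pdt_u[OF x])
  have "(\<Sum>a\<in>UNIV. \<Sum>b\<in>UNIV. christoffel g a a b x * (n x * u x $ b))
      = (\<Sum>b\<in>UNIV. \<Sum>a\<in>UNIV. christoffel g a a b x * (n x * u x $ b))" by (rule sum.swap)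
  also have "\<dots> = (\<Sum>b\<in>UNIV. u x $ b * ((\<Sum>a\<in>UNIV. christoffel g a a b x) * n x))"
    by (simp add: sum_distrib_left mult_ac)
  also have "\<dots> = u x $ tau * ((\<Sum>a\<in>UNIV. christoffel g a a tau x) * n x) + u x $ lam * ((\<Sum>a\<in>UNIV. christoffel g a a lam x) * n x)"
    by (rule dir_two[OF x])
  finally have s2: "(\<Sum>a\<in>UNIV. \<Sum>b\<in>UNIV. christoffel g a a b x * (n x * u x $ b)) =
     u x $ tau * ((\<Sum>a\<in>UNIV. christoffel g a a tau x) * n x) + u x $ lam * ((\<Sum>a\<in>UNIV. christoffel g a a lam x) * n x)" .
  have ct: "(\<Sum>a\<in>UNIV. christoffel g a a tau x) = 0"
    using contr_gam[OF x, of tau] pdt_det[OF x] gdet[OF x] by simp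
  have cl: "(\<Sum>a\<in>UNIV. christoffel g a a lam x) * det (g x) = 1/2 * pd lam (\<lambda>y. det (g y)) x"
    by (rule contr_gam[OF x])
  have "pd lam (\<lambda>y. n y * u y $ lam) x + u x $ lam * ((\<Sum>a\<in>UNIV. christoffel g a a lam x) * n x) = 0"
    using C unfolding s1 s1t s2 ct by simp
  then have "det (g x) * (pd lam (\<lambda>y. n y * u y $ lam) x + u x $ lam * ((\<Sum>a\<in>UNIV. christoffel g a a lam x) * n x)) = 0"
    by simp
  then show ?thesis using cl by algebra
qed

lemma Du_Q: "x \<in> U \<Longrightarrow> (\<Sum>a\<in>UNIV. u x $ a * pd a Q x) = 0"
proof -
  assume x: "x \<in> U"
  have pQ: "\<And>k. pd k Q x = det (g x) * ((n x * u x $ lam) * pd k (\<lambda>y. n y * u y $ lam) x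
      + pd k (\<lambda>y. n y * u y $ lam) x * (n x * u x $ lam)) + pd k (\<lambda>y. det (g y)) x * ((n x * u x $ lam) * (n x * u x $ lam))"
    unfolding Q_eq
    by (simp add: pd_mult[OF detd[OF x] differentiable_mult[OF nld[OF x] nld[OF x]]] pd_mult[OF nld[OF x] nld[OF x]])
  have t: "pd tau (\<lambda>y. n y * u y $ lam) x = 0"
    by (simp add: pd_mult[OF nd[OF x] ud[OF x]] pdt_n[OF x] pdt_u[OF x])
  have "pd tau Q x = 0" unfolding pQ t pdt_det[OF x] by simp
  moreover have "pd lam Q x = 0"
    unfolding pQ using cont_lam[OF x] by algebra
  ultimately show ?thesis unfolding dir_two[OF x] by simp
qed

end

definition C2R :: "real set \<Rightarrow> (real \<Rightarrow> real) \<Rightarrow> bool" where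
  "C2R S f \<longleftrightarrow> open S \<and> (\<forall>x\<in>S. f field_differentiable (at x) \<and> deriv f field_differentiable (at x))"

lemma fd_transform_open:
  assumes "f field_differentiable (at x)" "open S" "x \<in> S" "\<And>y. y \<in> S \<Longrightarrow> f y = g y"
  shows "g field_differentiable (at x)"
  using assms has_field_derivative_transform_within_open unfolding field_differentiable_def by blast

lemma deriv_eqI: "(f has_field_derivative D) (at x) \<Longrightarrow> deriv f x = D"
  by (rule DERIV_imp_deriv)

lemma C2R_fd: "C2R S f \<Longrightarrow> x \<in> S \<Longrightarrow> (f has_field_derivative deriv f x) (at x)"
  unfolding C2R_def using DERIV_deriv_iff_field_differentiable by blast

lemma C2R_fd2: "C2R S f \<Longrightarrow> x \<in> S \<Longrightarrow> (deriv f has_field_derivative deriv (deriv f) x) (at x)"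
  unfolding C2R_def using DERIV_deriv_iff_field_differentiable by blast

lemma C2R_open: "C2R S f \<Longrightarrow> open S" unfolding C2R_def by blast

lemma C2R_intro:
  assumes "open S" "\<And>x. x \<in> S \<Longrightarrow> (f has_field_derivative f' x) (at x)"
    "\<And>x. x \<in> S \<Longrightarrow> f' field_differentiable (at x)"
  shows "C2R S f"
  unfolding C2R_def
proof (intro conjI ballI)
  show "open S" by fact
  fix x assume x: "x \<in> S"
  show "f field_differentiable at x" using assms(2)[OF x] unfolding field_differentiable_def by blast
  have "\<And>y. y \<in> S \<Longrightarrow> f' y = deriv f y" using assms(2) DERIV_imp_deriv by metis
  then show "deriv f field_differentiable at x" by (rule fd_transform_open[OF assms(3)[OF x] assms(1) x])
qed

lemma C2R_cong: "C2R S f \<Longrightarrow> (\<And>x. x \<in> S \<Longrightarrow> f x = g x) \<Longrightarrow> C2R S g"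
proof -
  assume f: "C2R S f" and eq: "\<And>x. x \<in> S \<Longrightarrow> f x = g x"
  have o: "open S" using f C2R_open by blast
  show "C2R S g"
  proof (rule C2R_intro[OF o, of _ "deriv f"])
    fix x assume x: "x \<in> S"
    show "(g has_field_derivative deriv f x) (at x)"
      by (rule has_field_derivative_transform_within_open[OF C2R_fd[OF f x] o x eq])
    show "deriv f field_differentiable (at x)" using f x unfolding C2R_def by blast
  qed
qed

lemma C2R_subset: "C2R S f \<Longrightarrow> open S' \<Longrightarrow> S' \<subseteq> S \<Longrightarrow> C2R S' f"
  unfolding C2R_def by blast

lemma C2R_const: "open S \<Longrightarrow> C2R S (\<lambda>x. c)"
  by (rule C2R_intro[of _ _ "\<lambda>x. 0"]) auto

lemma C2R_id: "open S \<Longrightarrow> C2R S (\<lambda>x. x)"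
  by (rule C2R_intro[of _ _ "\<lambda>x. 1"]) auto

lemma fdiff_of: "C2R S f \<Longrightarrow> x \<in> S \<Longrightarrow> f field_differentiable (at x)"
  unfolding C2R_def by blast
lemma fdiff_of2: "C2R S f \<Longrightarrow> x \<in> S \<Longrightarrow> deriv f field_differentiable (at x)"
  unfolding C2R_def by blast

lemma C2R_add: "C2R S f \<Longrightarrow> C2R S g \<Longrightarrow> C2R S (\<lambda>x. f x + g x)"
proof -
  assume f: "C2R S f" and g: "C2R S g"
  show ?thesis
  proof (rule C2R_intro[OF C2R_open[OF f], of _ "\<lambda>x. deriv f x + deriv g x"])
    fix x assume x: "x \<in> S"
    show "((\<lambda>x. f x + g x) has_field_derivative deriv f x + deriv g x) (at x)"
      by (intro derivative_intros C2R_fd[OF f x] C2R_fd[OF g x])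
    show "(\<lambda>x. deriv f x + deriv g x) field_differentiable (at x)"
      by (intro field_differentiable_add fdiff_of2[OF f x] fdiff_of2[OF g x])
  qed
qed

lemma C2R_mult: "C2R S f \<Longrightarrow> C2R S g \<Longrightarrow> C2R S (\<lambda>x. f x * g x)"
proof -
  assume f: "C2R S f" and g: "C2R S g"
  show ?thesis
  proof (rule C2R_intro[OF C2R_open[OF f], of _ "\<lambda>x. deriv f x * g x + deriv g x * f x"])
    fix x assume x: "x \<in> S"
    show "((\<lambda>x. f x * g x) has_field_derivative deriv f x * g x + deriv g x * f x) (at x)"
      by (rule DERIV_mult[OF C2R_fd[OF f x] C2R_fd[OF g x]])
    show "(\<lambda>x. deriv f x * g x + deriv g x * f x) field_differentiable (at x)"
      by (intro field_differentiable_add field_differentiable_mult fdiff_of2[OF f x] fdiff_of2[OF g x]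
          fdiff_of[OF f x] fdiff_of[OF g x])
  qed
qed

lemma C2R_inverse: "C2R S f \<Longrightarrow> (\<And>x. x \<in> S \<Longrightarrow> f x \<noteq> 0) \<Longrightarrow> C2R S (\<lambda>x. inverse (f x))"
proof -
  assume f: "C2R S f" and nz: "\<And>x. x \<in> S \<Longrightarrow> f x \<noteq> 0"
  show ?thesis
  proof (rule C2R_intro[OF C2R_open[OF f], of _ "\<lambda>x. - (deriv f x * inverse (f x * f x))"])
    fix x assume x: "x \<in> S"
    show "((\<lambda>x. inverse (f x)) has_field_derivative - (deriv f x * inverse (f x * f x))) (at x)"
      using DERIV_inverse_fun[OF C2R_fd[OF f x] nz[OF x]] by (simp add: power2_eq_square)
    show "(\<lambda>x. - (deriv f x * inverse (f x * f x))) field_differentiable (at x)"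
      using nz[OF x]
      by (intro field_differentiable_minus field_differentiable_mult field_differentiable_inverse
          fdiff_of2[OF f x] fdiff_of[OF f x]) auto
  qed
qed

lemma C2R_sum: "finite A \<Longrightarrow> open S \<Longrightarrow> (\<And>i. i \<in> A \<Longrightarrow> C2R S (f i)) \<Longrightarrow> C2R S (\<lambda>x. \<Sum>i\<in>A. f i x)"
proof (induct A rule: finite_induct)
  case empty then show ?case by (simp add: C2R_const)
next
  case (insert a A)
  then show ?case by (simp add: C2R_add)
qed

lemma C2R_prod: "finite A \<Longrightarrow> open S \<Longrightarrow> (\<And>i. i \<in> A \<Longrightarrow> C2R S (f i)) \<Longrightarrow> C2R S (\<lambda>x. \<Prod>i\<in>A. f i x)"
proof (induct A rule: finite_induct)
  case empty then show ?case by (simp add: C2R_const)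
next
  case (insert a A)
  then show ?case by (simp add: C2R_mult)
qed

lemma real_fd_iff: "(f::real\<Rightarrow>real) field_differentiable (at x) \<longleftrightarrow> f differentiable (at x)"
  using DERIV_deriv_iff_field_differentiable DERIV_deriv_iff_real_differentiable by blast

context fluid begin

lemma gamma_hd: "\<sigma> \<in> I \<Longrightarrow> (\<gamma> has_derivative (\<lambda>t. t *\<^sub>R u (\<gamma> \<sigma>))) (at \<sigma>)"
  using worldline unfolding has_vector_derivative_def by blast

lemma gamma_U: "\<sigma> \<in> I \<Longrightarrow> \<gamma> \<sigma> \<in> U" using worldline by blast

lemma curve_deriv:
  assumes \<sigma>: "\<sigma> \<in> I" and fd: "f differentiable (at (\<gamma> \<sigma>))"
  shows "((\<lambda>t. f (\<gamma> t)) has_field_derivative (\<Sum>k\<in>UNIV. u (\<gamma> \<sigma>) $ k * pd k f (\<gamma> \<sigma>))) (at \<sigma>)"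
proof -
  let ?D = "frechet_derivative f (at (\<gamma> \<sigma>))"
  have F: "(f has_derivative ?D) (at (\<gamma> \<sigma>))" using fd frechet_derivative_works by blast
  have lin: "linear ?D" using F has_derivative_linear by blast
  have A: "((\<lambda>t. f (\<gamma> t)) has_derivative (\<lambda>t. ?D (t *\<^sub>R u (\<gamma> \<sigma>)))) (at \<sigma>)"
    by (rule has_derivative_compose[OF gamma_hd[OF \<sigma>] F])
  have E: "(\<lambda>t. ?D (t *\<^sub>R u (\<gamma> \<sigma>))) = (*) (?D (u (\<gamma> \<sigma>)))"
    by (rule ext) (simp add: linear_scale[OF lin] mult.commute)
  have "((\<lambda>t. f (\<gamma> t)) has_field_derivative ?D (u (\<gamma> \<sigma>))) (at \<sigma>)"
    unfolding has_field_derivative_def using A by (simp only: E)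
  moreover have "?D (u (\<gamma> \<sigma>)) = (\<Sum>k\<in>UNIV. u (\<gamma> \<sigma>) $ k * pd k f (\<gamma> \<sigma>))"
    by (rule fd_expand[OF fd])
  ultimately show ?thesis by simp
qed

lemma curve_const:
  assumes fd: "\<And>y. y \<in> U \<Longrightarrow> f differentiable (at y)"
    and z: "\<And>y. y \<in> U \<Longrightarrow> (\<Sum>k\<in>UNIV. u y $ k * pd k f y) = 0"
    and \<sigma>: "\<sigma> \<in> I"
  shows "f (\<gamma> \<sigma>) = f p"
proof -
  have "\<And>t. t \<in> I \<Longrightarrow> ((\<lambda>t. f (\<gamma> t)) has_field_derivative 0) (at t within I)"
  proof -
    fix t assume t: "t \<in> I"
    have "((\<lambda>t. f (\<gamma> t)) has_field_derivative 0) (at t)"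
      using curve_deriv[OF t fd[OF gamma_U[OF t]]] z[OF gamma_U[OF t]] by simp
    then show "((\<lambda>t. f (\<gamma> t)) has_field_derivative 0) (at t within I)"
      by (rule has_field_derivative_at_within)
  qed
  moreover have "convex I" using I_interval is_interval_convex by blast
  ultimately obtain c where "\<forall>t\<in>I. f (\<gamma> t) = c"
    using has_field_derivative_zero_constant by blast
  then show ?thesis using \<sigma> \<sigma>0_in through_p by metis
qed

lemma curve_C2R:
  assumes fd: "\<And>y. y \<in> U \<Longrightarrow> f differentiable (at y)"
    and fdd: "\<And>y k. y \<in> U \<Longrightarrow> pd k f differentiable (at y)"
  shows "C2R I (\<lambda>t. f (\<gamma> t))"
proof (rule C2R_intro[OF I_open])
  fix \<sigma> assume \<sigma>: "\<sigma> \<in> I"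
  show "((\<lambda>t. f (\<gamma> t)) has_field_derivative (\<Sum>k\<in>UNIV. u (\<gamma> \<sigma>) $ k * pd k f (\<gamma> \<sigma>))) (at \<sigma>)"
    by (rule curve_deriv[OF \<sigma> fd[OF gamma_U[OF \<sigma>]]])
  have "(\<lambda>y. \<Sum>k\<in>UNIV. u y $ k * pd k f y) differentiable (at (\<gamma> \<sigma>))"
    using gamma_U[OF \<sigma>] ud fdd by (intro differentiable_sum differentiable_mult) auto
  moreover have "\<gamma> differentiable (at \<sigma>)" using gamma_hd[OF \<sigma>] unfolding differentiable_def by blast
  ultimately have "(\<lambda>t. \<Sum>k\<in>UNIV. u (\<gamma> t) $ k * pd k f (\<gamma> t)) differentiable (at \<sigma>)"
    using differentiable_compose[of "\<lambda>y. \<Sum>k\<in>UNIV. u y $ k * pd k f y" \<gamma> \<sigma>] by simp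
  then show "(\<lambda>t. \<Sum>k\<in>UNIV. u (\<gamma> t) $ k * pd k f (\<gamma> t)) field_differentiable (at \<sigma>)"
    using real_fd_iff by blast
qed

end

lemma fd_hd: "(f has_field_derivative D) (at x) \<Longrightarrow> (f has_derivative (\<lambda>h. h * D)) (at x)"
proof -
  have "(\<lambda>h. h * D) = (*) D" by (rule ext) (simp add: mult.commute)
  then show "(f has_field_derivative D) (at x) \<Longrightarrow> (f has_derivative (\<lambda>h. h * D)) (at x)"
    unfolding has_field_derivative_def by simp
qed

lemma bil_hd:
  fixes p q r t :: "real \<Rightarrow> real"
  assumes p: "(p has_field_derivative p') (at m0)" and q: "(q has_field_derivative q') (at m0)"
    and r: "(r has_field_derivative r') (at s0)" and t: "(t has_field_derivative t') (at s0)"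
  shows "((\<lambda>z. p (snd z) * r (fst z) + q (snd z) * t (fst z)) has_derivative
     (\<lambda>h. p m0 * (fst h * r') + snd h * p' * r s0 + (q m0 * (fst h * t') + snd h * q' * t s0))) (at (s0, m0))"
proof -
  have ps: "((\<lambda>z. p (snd z)) has_derivative (\<lambda>h. snd h * p')) (at (s0, m0))"
  proof -
    have A: "(snd has_derivative snd) (at (s0, m0))" by (rule has_derivative_snd[OF has_derivative_ident])
    have B: "(p has_derivative (\<lambda>h. h * p')) (at (snd (s0, m0)))" using fd_hd[OF p] by simp
    show ?thesis using has_derivative_compose[OF A B] .
  qed
  have qs: "((\<lambda>z. q (snd z)) has_derivative (\<lambda>h. snd h * q')) (at (s0, m0))"
  proof -
    have A: "(snd has_derivative snd) (at (s0, m0))" by (rule has_derivative_snd[OF has_derivative_ident])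
    have B: "(q has_derivative (\<lambda>h. h * q')) (at (snd (s0, m0)))" using fd_hd[OF q] by simp
    show ?thesis using has_derivative_compose[OF A B] .
  qed
  have rf: "((\<lambda>z. r (fst z)) has_derivative (\<lambda>h. fst h * r')) (at (s0, m0))"
  proof -
    have A: "(fst has_derivative fst) (at (s0, m0))" by (rule has_derivative_fst[OF has_derivative_ident])
    have B: "(r has_derivative (\<lambda>h. h * r')) (at (fst (s0, m0)))" using fd_hd[OF r] by simp
    show ?thesis using has_derivative_compose[OF A B] .
  qed
  have tf: "((\<lambda>z. t (fst z)) has_derivative (\<lambda>h. fst h * t')) (at (s0, m0))"
  proof -
    have A: "(fst has_derivative fst) (at (s0, m0))" by (rule has_derivative_fst[OF has_derivative_ident])
    have B: "(t has_derivative (\<lambda>h. h * t')) (at (fst (s0, m0)))" using fd_hd[OF t] by simp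
    show ?thesis using has_derivative_compose[OF A B] .
  qed
  show ?thesis
    using has_derivative_add[OF has_derivative_mult[OF ps rf] has_derivative_mult[OF qs tf]] by simp
qed

lemma bil_dd:
  fixes p q r t :: "real \<Rightarrow> real" and B :: "real \<times> real \<Rightarrow> real"
  assumes p: "(p has_field_derivative p') (at m0)" and q: "(q has_field_derivative q') (at m0)"
    and r: "(r has_field_derivative r') (at s0)" and t: "(t has_field_derivative t') (at s0)"
    and W: "open W" "(s0, m0) \<in> W" and B: "\<And>z. z \<in> W \<Longrightarrow> B z = p (snd z) * r (fst z) + q (snd z) * t (fst z)"
  shows "dderiv (1, 0) B (s0, m0) = p m0 * r' + q m0 * t'"
    "dderiv (0, 1) B (s0, m0) = p' * r s0 + q' * t s0"
proof -
  have "(B has_derivative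
     (\<lambda>h. p m0 * (fst h * r') + snd h * p' * r s0 + (q m0 * (fst h * t') + snd h * q' * t s0))) (at (s0, m0))"
    by (rule has_derivative_transform_within_open[OF bil_hd[OF p q r t] W]) (simp add: B)
  from dderiv_eq[OF this] show "dderiv (1, 0) B (s0, m0) = p m0 * r' + q m0 * t'"
    "dderiv (0, 1) B (s0, m0) = p' * r s0 + q' * t s0" by simp_all
qed

lemma hess_abstract:
  fixes F :: "real \<times> real \<Rightarrow> real" and a e k1 k2 N :: "real \<Rightarrow> real" and S T :: "real set"
  assumes a: "C2R S a" and e: "C2R S e" and k1: "C2R T k1" and k2: "C2R T k2" and N: "C2R S N"
    and \<sigma>0: "\<sigma>0 \<in> S" and NT: "\<And>\<sigma>. \<sigma> \<in> S \<Longrightarrow> N \<sigma> \<in> T"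
    and Feq: "\<And>\<sigma> m. \<sigma> \<in> S \<Longrightarrow> m \<in> T \<Longrightarrow> F (\<sigma>, m) = k1 m * a \<sigma> + k2 m * e \<sigma>"
    and const: "\<And>\<sigma>. \<sigma> \<in> S \<Longrightarrow> F (\<sigma>, N \<sigma>) = F (\<sigma>0, N \<sigma>0)"
    and Fn0: "deriv k1 (N \<sigma>0) * a \<sigma>0 + deriv k2 (N \<sigma>0) * e \<sigma>0 = 0"
  shows "dderiv (0, 1) F (\<sigma>0, N \<sigma>0) = 0 \<and> dderiv (1, 0) F (\<sigma>0, N \<sigma>0) = 0 \<and>
    dderiv (1, 0) (dderiv (1, 0) F) (\<sigma>0, N \<sigma>0) * dderiv (0, 1) (dderiv (0, 1) F) (\<sigma>0, N \<sigma>0)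
      - (dderiv (1, 0) (dderiv (0, 1) F) (\<sigma>0, N \<sigma>0))^2 \<le> 0"
proof -
  have So: "open S" using a C2R_open by blast
  have To: "open T" using k1 C2R_open by blast
  define W where "W = S \<times> T"
  have Wo: "open W" unfolding W_def using So To by (rule open_Times)
  define m0 where "m0 = N \<sigma>0"
  have m0: "m0 \<in> T" unfolding m0_def by (rule NT[OF \<sigma>0])
  have z0: "(\<sigma>0, m0) \<in> W" unfolding W_def using \<sigma>0 m0 by simp
  have F1: "\<And>z. z \<in> W \<Longrightarrow> dderiv (1, 0) F z = k1 (snd z) * deriv a (fst z) + k2 (snd z) * deriv e (fst z)"
   and F2: "\<And>z. z \<in> W \<Longrightarrow> dderiv (0, 1) F z = deriv k1 (snd z) * a (fst z) + deriv k2 (snd z) * e (fst z)"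
  proof -
    fix z assume z: "z \<in> W"
    obtain \<sigma> m where zz: "z = (\<sigma>, m)" by (cases z)
    have \<sigma>: "\<sigma> \<in> S" and m: "m \<in> T" using z zz W_def by auto
    have B: "\<And>z. z \<in> W \<Longrightarrow> F z = k1 (snd z) * a (fst z) + k2 (snd z) * e (fst z)"
      unfolding W_def using Feq by auto
    note bd = bil_dd[OF C2R_fd[OF k1 m] C2R_fd[OF k2 m] C2R_fd[OF a \<sigma>] C2R_fd[OF e \<sigma>] Wo z[unfolded zz] B]
    show "dderiv (1, 0) F z = k1 (snd z) * deriv a (fst z) + k2 (snd z) * deriv e (fst z)"
      using bd(1) zz by simp
    show "dderiv (0, 1) F z = deriv k1 (snd z) * a (fst z) + deriv k2 (snd z) * e (fst z)"
      using bd(2) zz by simp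
  qed
  have F11: "dderiv (1, 0) (dderiv (1, 0) F) (\<sigma>0, m0) = k1 m0 * deriv (deriv a) \<sigma>0 + k2 m0 * deriv (deriv e) \<sigma>0"
    using bil_dd(1)[OF C2R_fd[OF k1 m0] C2R_fd[OF k2 m0] C2R_fd2[OF a \<sigma>0] C2R_fd2[OF e \<sigma>0] Wo z0 F1] .
  have F12: "dderiv (1, 0) (dderiv (0, 1) F) (\<sigma>0, m0) = deriv k1 m0 * deriv a \<sigma>0 + deriv k2 m0 * deriv e \<sigma>0"
    using bil_dd(1)[OF C2R_fd2[OF k1 m0] C2R_fd2[OF k2 m0] C2R_fd[OF a \<sigma>0] C2R_fd[OF e \<sigma>0] Wo z0 F2] .
  have F22: "dderiv (0, 1) (dderiv (0, 1) F) (\<sigma>0, m0) = deriv (deriv k1) m0 * a \<sigma>0 + deriv (deriv k2) m0 * e \<sigma>0"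
    using bil_dd(2)[OF C2R_fd2[OF k1 m0] C2R_fd2[OF k2 m0] C2R_fd[OF a \<sigma>0] C2R_fd[OF e \<sigma>0] Wo z0 F2] .
  have F10: "dderiv (1, 0) F (\<sigma>0, m0) = k1 m0 * deriv a \<sigma>0 + k2 m0 * deriv e \<sigma>0"
    using F1[OF z0] by simp
  have F01: "dderiv (0, 1) F (\<sigma>0, m0) = deriv k1 m0 * a \<sigma>0 + deriv k2 m0 * e \<sigma>0"
    using F2[OF z0] by simp
  define psi where "psi \<sigma> = deriv k1 (N \<sigma>) * deriv N \<sigma> * a \<sigma> + k1 (N \<sigma>) * deriv a \<sigma>
      + (deriv k2 (N \<sigma>) * deriv N \<sigma> * e \<sigma> + k2 (N \<sigma>) * deriv e \<sigma>)" for \<sigma>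
  have psi0: "\<And>\<sigma>. \<sigma> \<in> S \<Longrightarrow> psi \<sigma> = 0"
  proof -
    fix \<sigma> assume \<sigma>: "\<sigma> \<in> S"
    have c1: "((\<lambda>x. k1 (N x)) has_field_derivative deriv k1 (N \<sigma>) * deriv N \<sigma>) (at \<sigma>)"
      by (rule DERIV_chain2[OF C2R_fd[OF k1 NT[OF \<sigma>]] C2R_fd[OF N \<sigma>]])
    have c2: "((\<lambda>x. k2 (N x)) has_field_derivative deriv k2 (N \<sigma>) * deriv N \<sigma>) (at \<sigma>)"
      by (rule DERIV_chain2[OF C2R_fd[OF k2 NT[OF \<sigma>]] C2R_fd[OF N \<sigma>]])
    have "((\<lambda>x. k1 (N x) * a x + k2 (N x) * e x) has_field_derivative psi \<sigma>) (at \<sigma>)"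
      unfolding psi_def using DERIV_add[OF DERIV_mult[OF c1 C2R_fd[OF a \<sigma>]] DERIV_mult[OF c2 C2R_fd[OF e \<sigma>]]]
      by (simp add: algebra_simps)
    moreover have "((\<lambda>x. k1 (N x) * a x + k2 (N x) * e x) has_field_derivative 0) (at \<sigma>)"
    proof (rule has_field_derivative_transform_within_open[OF DERIV_const So \<sigma>])
      fix x assume x: "x \<in> S"
      show "F (\<sigma>0, N \<sigma>0) = k1 (N x) * a x + k2 (N x) * e x"
        using const[OF x] Feq[OF x NT[OF x]] by simp
    qed
    ultimately show "psi \<sigma> = 0" by (rule DERIV_unique)
  qed
  have d1: "((\<lambda>x. deriv k1 (N x)) has_field_derivative deriv (deriv k1) m0 * deriv N \<sigma>0) (at \<sigma>0)"
    unfolding m0_def by (rule DERIV_chain2[OF C2R_fd2[OF k1 NT[OF \<sigma>0]] C2R_fd[OF N \<sigma>0]])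
  have d2: "((\<lambda>x. deriv k2 (N x)) has_field_derivative deriv (deriv k2) m0 * deriv N \<sigma>0) (at \<sigma>0)"
    unfolding m0_def by (rule DERIV_chain2[OF C2R_fd2[OF k2 NT[OF \<sigma>0]] C2R_fd[OF N \<sigma>0]])
  have c1: "((\<lambda>x. k1 (N x)) has_field_derivative deriv k1 m0 * deriv N \<sigma>0) (at \<sigma>0)"
    unfolding m0_def by (rule DERIV_chain2[OF C2R_fd[OF k1 NT[OF \<sigma>0]] C2R_fd[OF N \<sigma>0]])
  have c2: "((\<lambda>x. k2 (N x)) has_field_derivative deriv k2 m0 * deriv N \<sigma>0) (at \<sigma>0)"
    unfolding m0_def by (rule DERIV_chain2[OF C2R_fd[OF k2 NT[OF \<sigma>0]] C2R_fd[OF N \<sigma>0]])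
  define A where "A = a \<sigma>0"
  define A1 where "A1 = deriv a \<sigma>0"
  define A2 where "A2 = deriv (deriv a) \<sigma>0"
  define E where "E = e \<sigma>0"
  define E1 where "E1 = deriv e \<sigma>0"
  define E2 where "E2 = deriv (deriv e) \<sigma>0"
  define K1 where "K1 = k1 m0"
  define K11 where "K11 = deriv k1 m0"
  define K12 where "K12 = deriv (deriv k1) m0"
  define K2 where "K2 = k2 m0"
  define K21 where "K21 = deriv k2 m0"
  define K22 where "K22 = deriv (deriv k2) m0"
  define Np where "Np = deriv N \<sigma>0"
  define Npp where "Npp = deriv (deriv N) \<sigma>0"
  have "(psi has_field_derivative
      ((K12 * Np * Np + K11 * Npp) * A + K11 * Np * A1) + (K11 * Np * A1 + K1 * A2)
      + (((K22 * Np * Np + K21 * Npp) * E + K21 * Np * E1) + (K21 * Np * E1 + K2 * E2))) (at \<sigma>0)"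
  proof -
    have pe: "psi = (\<lambda>x. (deriv k1 (N x) * deriv N x * a x + k1 (N x) * deriv a x)
      + (deriv k2 (N x) * deriv N x * e x + k2 (N x) * deriv e x))"
      by (rule ext) (simp add: psi_def)
    note X = DERIV_add[OF DERIV_add[OF DERIV_mult[OF DERIV_mult[OF d1 C2R_fd2[OF N \<sigma>0]] C2R_fd[OF a \<sigma>0]]
                                      DERIV_mult[OF c1 C2R_fd2[OF a \<sigma>0]]]
                          DERIV_add[OF DERIV_mult[OF DERIV_mult[OF d2 C2R_fd2[OF N \<sigma>0]] C2R_fd[OF e \<sigma>0]]
                                      DERIV_mult[OF c2 C2R_fd2[OF e \<sigma>0]]]]
    show ?thesis unfolding pe
      by (rule DERIV_cong[OF X]) (simp add: A_def A1_def A2_def E_def E1_def E2_def K1_def K11_def K12_def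
        K2_def K21_def K22_def Np_def Npp_def m0_def algebra_simps)
  qed
  moreover have "(psi has_field_derivative 0) (at \<sigma>0)"
    by (rule has_field_derivative_transform_within_open[OF DERIV_const So \<sigma>0]) (simp add: psi0)
  ultimately have R2: "((K12 * Np * Np + K11 * Npp) * A + K11 * Np * A1) + (K11 * Np * A1 + K1 * A2)
      + (((K22 * Np * Np + K21 * Npp) * E + K21 * Np * E1) + (K21 * Np * E1 + K2 * E2)) = 0"
    by (rule DERIV_unique)
  have R1: "K11 * Np * A + K1 * A1 + (K21 * Np * E + K2 * E1) = 0"
    using psi0[OF \<sigma>0] unfolding psi_def A_def A1_def E_def E1_def K1_def K11_def K2_def K21_def Np_def m0_def .
  have R0: "K11 * A + K21 * E = 0" using Fn0 unfolding K11_def K21_def A_def E_def m0_def .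
  have Fs: "K1 * A1 + K2 * E1 = 0" using R1 R0 by algebra
  have hess: "(K1 * A2 + K2 * E2) * (K12 * A + K22 * E) - (K11 * A1 + K21 * E1) * (K11 * A1 + K21 * E1)
      = - (((K12 * A + K22 * E) * Np + (K11 * A1 + K21 * E1)) * ((K12 * A + K22 * E) * Np + (K11 * A1 + K21 * E1)))"
    using R2 R0 by algebra
  show ?thesis
    unfolding m0_def[symmetric] F01 F10 F11 F12 F22
    using R0 Fs hess unfolding A_def A1_def A2_def E_def E1_def E2_def K1_def K11_def K12_def
        K2_def K21_def K22_def by (simp add: mult.commute power2_eq_square)
qed

lemma C2R_sqrt: "C2R S f \<Longrightarrow> (\<And>x. x \<in> S \<Longrightarrow> f x > 0) \<Longrightarrow> C2R S (\<lambda>x. sqrt (f x))"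
proof -
  assume f: "C2R S f" and p: "\<And>x. x \<in> S \<Longrightarrow> f x > 0"
  have D: "\<And>x. x \<in> S \<Longrightarrow> ((\<lambda>x. sqrt (f x)) has_field_derivative inverse (sqrt (f x)) / 2 * deriv f x) (at x)"
    using DERIV_chain2[OF DERIV_real_sqrt C2R_fd[OF f]] p by blast
  show ?thesis
  proof (rule C2R_intro[OF C2R_open[OF f] D])
    fix x assume x: "x \<in> S"
    have sq: "(\<lambda>x. sqrt (f x)) field_differentiable (at x)" using D[OF x] unfolding field_differentiable_def by blast
    show "(\<lambda>x. inverse (sqrt (f x)) / 2 * deriv f x) field_differentiable (at x)"
      using p[OF x]
      by (intro field_differentiable_mult field_differentiable_divide field_differentiable_inverse sq
          fdiff_of2[OF f x] field_differentiable_const) auto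
  qed
qed

lemma C2R_cmult: "C2R S f \<Longrightarrow> C2R S (\<lambda>x. c * f x)"
  using C2R_mult[OF C2R_const[OF C2R_open] ] by blast

context fluid begin

lemma C2R_gc: "C2R I (\<lambda>\<sigma>. g (\<gamma> \<sigma>) $ i $ j)"
  by (rule curve_C2R) (auto intro: gd gpdd)

lemma C2R_N: "C2R I (\<lambda>\<sigma>. n (\<gamma> \<sigma>))"
  by (rule curve_C2R) (auto intro: nd npdd)

lemma C2R_Delta: "C2R I (\<lambda>\<sigma>. det (g (\<gamma> \<sigma>)))"
proof -
  have "C2R I (\<lambda>\<sigma>. \<Sum>p\<in>{p. p permutes (UNIV::'n set)}. of_int (sign p) * (\<Prod>i\<in>UNIV. g (\<gamma> \<sigma>) $ i $ p i))"
    by (intro C2R_sum C2R_mult C2R_const C2R_prod C2R_gc I_open finite_permutations) auto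
  then show ?thesis by (rule C2R_cong) (simp add: det_def)
qed

lemma K_deriv: "m > 0 \<Longrightarrow> s0 > 0 \<Longrightarrow> ((\<lambda>m. H (m, s0)) has_field_derivative dderiv (1, 0) H (m, s0)) (at m)"
proof -
  assume m: "m > 0" "s0 > 0"
  have DH: "(H has_derivative frechet_derivative H (at (m, s0))) (at (m, s0))"
    using Hd[OF m] frechet_derivative_works by blast
  have P: "((\<lambda>m. (m, s0)) has_derivative (\<lambda>t. (t, 0))) (at m)"
    by (rule has_derivative_Pair[OF has_derivative_ident has_derivative_const])
  have "((\<lambda>m. H (m, s0)) has_derivative (\<lambda>t. frechet_derivative H (at (m, s0)) (t, 0))) (at m)"
    using has_derivative_compose[OF P DH] by simp
  moreover have "(\<lambda>t. frechet_derivative H (at (m, s0)) (t, 0)) = (*) (dderiv (1, 0) H (m, s0))"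
    by (rule ext) (simp add: H_lin[OF m] mult.commute)
  ultimately show ?thesis unfolding has_field_derivative_def by simp
qed

lemma C2R_K: "s0 > 0 \<Longrightarrow> C2R {0<..} (\<lambda>m. H (m, s0))"
proof -
  assume s0: "s0 > 0"
  show ?thesis
  proof (rule C2R_intro[OF open_greaterThan, where f'="\<lambda>m. dderiv (1, 0) H (m, s0)"])
    fix m :: real assume "m \<in> {0<..}"
    then have m: "m > 0" by simp
    show "((\<lambda>m. H (m, s0)) has_field_derivative dderiv (1, 0) H (m, s0)) (at m)"
      by (rule K_deriv[OF m s0])
    have b: "((1::real), (0::real)) \<in> Basis" by (simp add: Basis_prod_def)
    have "dderiv (1, 0) H differentiable (at (m, s0))"
      using C2_dd_diff[OF eos_C2 quad_open _ b] m s0 by simp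
    moreover have "(\<lambda>m. (m, s0)) differentiable (at m)"
      using has_derivative_Pair[OF has_derivative_ident has_derivative_const[of s0]]
      unfolding differentiable_def by blast
    ultimately have "(\<lambda>m. dderiv (1, 0) H (m, s0)) differentiable (at m)"
      using differentiable_compose[of "dderiv (1, 0) H" "\<lambda>m. (m, s0)" m] by simp
    then show "(\<lambda>m. dderiv (1, 0) H (m, s0)) field_differentiable (at m)"
      using real_fd_iff by blast
  qed
qed

lemma s_const: "\<sigma> \<in> I \<Longrightarrow> s (\<gamma> \<sigma>) = s p"
  by (rule curve_const[OF sd Du_s])

lemma Wt_const: "\<sigma> \<in> I \<Longrightarrow> Wt (\<gamma> \<sigma>) = Wt p"
proof (rule curve_const[OF _ Du_Wt])
  fix y assume y: "y \<in> U"
  show "Wt differentiable (at y)" unfolding Wt_eq using hd[OF y] gtu_d[OF y] by (rule differentiable_mult)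
qed

lemma Q_const: "\<sigma> \<in> I \<Longrightarrow> Q (\<gamma> \<sigma>) = Q p"
proof (rule curve_const[OF _ Du_Q])
  fix y assume y: "y \<in> U"
  show "Q differentiable (at y)" unfolding Q_eq
    by (rule differentiable_mult[OF detd[OF y] differentiable_mult[OF nld[OF y] nld[OF y]]])
qed

lemma F_on_curve:
  assumes \<sigma>: "\<sigma> \<in> I"
  shows "(H (n (\<gamma> \<sigma>), s p))^2 * \<bar>g (\<gamma> \<sigma>) $ tau $ tau\<bar>
      * (1 + ((sqrt \<bar>det (g p)\<bar> * n p * (u p $ lam)) / (sqrt \<bar>det (g (\<gamma> \<sigma>))\<bar> * n (\<gamma> \<sigma>)))^2)
    = (Wt p)^2"
proof -
  define y where "y = \<gamma> \<sigma>"
  have y: "y \<in> U" unfolding y_def by (rule gamma_U[OF \<sigma>])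
  have sy: "s y = s p" unfolding y_def by (rule s_const[OF \<sigma>])
  have hy: "H (n y, s p) = h y" using h_eos y sy by simp
  have Qy: "Q y = Q p" unfolding y_def by (rule Q_const[OF \<sigma>])
  have Wy: "Wt y = Wt p" unfolding y_def by (rule Wt_const[OF \<sigma>])
  define dy where "dy = det (g y)"
  define dp where "dp = det (g p)"
  define ly where "ly = u y $ lam"
  define lp where "lp = u p $ lam"
  have dy0: "\<bar>dy\<bar> > 0" using gdet[OF y] dy_def by simp
  have ny: "n y > 0" using pos y by blast
  have Qe: "dy * ((n y * ly) * (n y * ly)) = dp * ((n p * lp) * (n p * lp))"
    using Qy unfolding Q_def dy_def dp_def ly_def lp_def .
  have Qa: "\<bar>dy\<bar> * ((n y * ly) * (n y * ly)) = \<bar>dp\<bar> * ((n p * lp) * (n p * lp))"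
  proof -
    define Xy where "Xy = (n y * ly) * (n y * ly)"
    define Xp where "Xp = (n p * lp) * (n p * lp)"
    have xy: "Xy \<ge> 0" unfolding Xy_def by (rule zero_le_square)
    have xp: "Xp \<ge> 0" unfolding Xp_def by (rule zero_le_square)
    have "\<bar>dy * Xy\<bar> = \<bar>dp * Xp\<bar>" using Qe unfolding Xy_def Xp_def by simp
    then have "\<bar>dy\<bar> * Xy = \<bar>dp\<bar> * Xp" by (simp add: abs_mult abs_of_nonneg[OF xy] abs_of_nonneg[OF xp])
    then show ?thesis unfolding Xy_def Xp_def .
  qed
  have q: "((sqrt \<bar>dp\<bar> * n p * lp) / (sqrt \<bar>dy\<bar> * n y))^2 = ly * ly"
  proof -
    have "((sqrt \<bar>dp\<bar> * n p * lp) / (sqrt \<bar>dy\<bar> * n y))^2 = (\<bar>dp\<bar> * ((n p * lp) * (n p * lp))) / (\<bar>dy\<bar> * (n y * n y))"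
      by (simp add: power_divide power_mult_distrib power2_eq_square[symmetric] real_sqrt_pow2)
    also have "\<dots> = (\<bar>dy\<bar> * ((n y * ly) * (n y * ly))) / (\<bar>dy\<bar> * (n y * n y))" unfolding Qa ..
    also have "\<dots> = ly * ly" using dy0 ny by (simp add: field_simps)
    finally show ?thesis .
  qed
  have N: "g y $ tau $ tau * (u y $ tau * u y $ tau) + ly * ly = -1" using norm_u[OF y] unfolding ly_def .
  have A: "g y $ tau $ tau < 0" using timelike y by blast
  have "(H (n y, s p))^2 * \<bar>g y $ tau $ tau\<bar> * (1 + ((sqrt \<bar>dp\<bar> * n p * lp) / (sqrt \<bar>dy\<bar> * n y))^2)
      = (h y)^2 * (- g y $ tau $ tau) * (1 + ly * ly)" unfolding q hy using A by simp
  also have "\<dots> = (Wt y)^2"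
  proof -
    have "1 + ly * ly = - g y $ tau $ tau * (u y $ tau * u y $ tau)" using N by linarith
    then show ?thesis unfolding Wt_def by (simp add: power2_eq_square)
  qed
  also have "\<dots> = (Wt p)^2" using Wy by simp
  finally show ?thesis unfolding y_def dy_def dp_def lp_def .
qed

end

context fluid begin

lemma main:
  assumes sonic: "v p = sqrt (sound_speed_sq H (n p) (s p))"
  shows "let F = fluid_F H (s p) (sqrt \<bar>det (g p)\<bar> * n p * (u p $ lam)) g tau \<gamma>;
             pc = (\<sigma>0, n p)
         in dderiv (0, 1) F pc = 0 \<and> dderiv (1, 0) F pc = 0 \<and>
            dderiv (1, 0) (dderiv (1, 0) F) pc * dderiv (0, 1) (dderiv (0, 1) F) pc
              - (dderiv (1, 0) (dderiv (0, 1) F) pc)^2 \<le> 0"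
proof -
  define s0 where "s0 = s p"
  define mu where "mu = sqrt \<bar>det (g p)\<bar> * n p * (u p $ lam)"
  define F where "F = fluid_F H s0 mu g tau \<gamma>"
  define T :: "real set" where "T = {0<..}"
  define K where "K m = H (m, s0)" for m
  define k1 where "k1 m = K m * K m" for m
  define k2 where "k2 m = mu^2 * (K m * K m) * inverse (m * m)" for m
  define a where "a \<sigma> = - g (\<gamma> \<sigma>) $ tau $ tau" for \<sigma>
  define D where "D \<sigma> = det (g (\<gamma> \<sigma>))" for \<sigma>
  define e where "e \<sigma> = a \<sigma> * inverse (sqrt (D \<sigma> * D \<sigma>))" for \<sigma>
  define N where "N \<sigma> = n (\<gamma> \<sigma>)" for \<sigma>
  have s0: "s0 > 0" unfolding s0_def using pos p_in by blast
  have To: "open T" unfolding T_def by simp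
  have CK: "C2R T K" unfolding T_def K_def by (rule C2R_K[OF s0])
  have Ck1: "C2R T k1" unfolding k1_def by (rule C2R_mult[OF CK CK])
  have Ck2: "C2R T k2"
  proof -
    have "C2R T (\<lambda>m. mu^2 * (K m * K m))" by (rule C2R_mult[OF C2R_const[OF To] Ck1[unfolded k1_def]])
    moreover have "C2R T (\<lambda>m. inverse (m * m))"
      by (rule C2R_inverse[OF C2R_mult[OF C2R_id[OF To] C2R_id[OF To]]]) (simp add: T_def)
    ultimately show ?thesis unfolding k2_def by (rule C2R_mult)
  qed
  have Ca: "C2R I a"
  proof -
    have "C2R I (\<lambda>\<sigma>. (-1) * g (\<gamma> \<sigma>) $ tau $ tau)" by (rule C2R_cmult[OF C2R_gc])
    then show ?thesis unfolding a_def by (rule C2R_cong) simp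
  qed
  have D0: "\<And>\<sigma>. \<sigma> \<in> I \<Longrightarrow> D \<sigma> \<noteq> 0" unfolding D_def using gdet gamma_U by blast
  have CD: "C2R I D" unfolding D_def by (rule C2R_Delta)
  have Ce: "C2R I e"
  proof -
    have "C2R I (\<lambda>\<sigma>. sqrt (D \<sigma> * D \<sigma>))"
      by (rule C2R_sqrt[OF C2R_mult[OF CD CD]]) (use D0 not_real_square_gt_zero in blast)
    then have "C2R I (\<lambda>\<sigma>. inverse (sqrt (D \<sigma> * D \<sigma>)))"
      by (rule C2R_inverse) (use D0 in simp)
    then show ?thesis unfolding e_def by (rule C2R_mult[OF Ca])
  qed
  have CN: "C2R I N" unfolding N_def by (rule C2R_N)
  have NT: "\<And>\<sigma>. \<sigma> \<in> I \<Longrightarrow> N \<sigma> \<in> T" unfolding N_def T_def using pos gamma_U by auto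
  have Feq: "\<And>\<sigma> m. \<sigma> \<in> I \<Longrightarrow> m \<in> T \<Longrightarrow> F (\<sigma>, m) = k1 m * a \<sigma> + k2 m * e \<sigma>"
  proof -
    fix \<sigma> m assume \<sigma>: "\<sigma> \<in> I" and m: "m \<in> T"
    have m0: "m > 0" using m T_def by simp
    have Dp: "\<bar>D \<sigma>\<bar> > 0" using D0[OF \<sigma>] by simp
    have gt: "g (\<gamma> \<sigma>) $ tau $ tau < 0" using timelike gamma_U[OF \<sigma>] by blast
    have "F (\<sigma>, m) = (K m)^2 * a \<sigma> * (1 + (mu / (sqrt \<bar>D \<sigma>\<bar> * m))^2)"
      unfolding F_def fluid_F_def K_def a_def D_def using gt by simp
    also have "(mu / (sqrt \<bar>D \<sigma>\<bar> * m))^2 = mu^2 / (\<bar>D \<sigma>\<bar> * (m * m))"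
      using Dp by (simp add: power_divide power_mult_distrib power2_eq_square[symmetric])
    finally show "F (\<sigma>, m) = k1 m * a \<sigma> + k2 m * e \<sigma>"
      unfolding k1_def k2_def e_def using Dp m0 by (simp add: field_simps power2_eq_square)
  qed
  have Np: "N \<sigma>0 = n p" unfolding N_def using through_p by simp
  have const: "\<And>\<sigma>. \<sigma> \<in> I \<Longrightarrow> F (\<sigma>, N \<sigma>) = F (\<sigma>0, N \<sigma>0)"
  proof -
    fix \<sigma> assume \<sigma>: "\<sigma> \<in> I"
    have "F (\<sigma>, N \<sigma>) = (Wt p)^2"
      using F_on_curve[OF \<sigma>] unfolding F_def fluid_F_def N_def s0_def mu_def by simp
    moreover have "F (\<sigma>0, N \<sigma>0) = (Wt p)^2"
      using F_on_curve[OF \<sigma>0_in] unfolding F_def fluid_F_def N_def s0_def mu_def by simp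
    ultimately show "F (\<sigma>, N \<sigma>) = F (\<sigma>0, N \<sigma>0)" by simp
  qed
  have Fn0: "deriv k1 (N \<sigma>0) * a \<sigma>0 + deriv k2 (N \<sigma>0) * e \<sigma>0 = 0"
  proof -
    define m where "m = n p"
    define K0 where "K0 = K m"
    define K1 where "K1 = dderiv (1, 0) H (m, s0)"
    define A where "A = g p $ tau $ tau"
    define Dl where "Dl = det (g p)"
    define l where "l = u p $ lam"
    define c2 where "c2 = sound_speed_sq H m s0"
    have m: "m > 0" unfolding m_def using pos p_in by blast
    have K0p: "K0 > 0" unfolding K0_def K_def using eos m s0 by blast
    have c2: "0 < c2" "c2 < 1" unfolding c2_def using eos m s0 by blast+
    have Dl: "\<bar>Dl\<bar> > 0" unfolding Dl_def using gdet[OF p_in] by simp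
    have c2K: "c2 * K0 = m * K1" unfolding c2_def sound_speed_sq_def K0_def K_def K1_def
      using K0p[unfolded K0_def K_def] by simp
    have vsq: "v p = sqrt c2" using sonic unfolding c2_def m_def s0_def .
    have vp: "v p * v p = c2" unfolding vsq using c2 by simp
    have v1: "1 - v p * v p > 0" using vp c2 by simp
    have L2: "l * l = c2 / (1 - c2)"
    proof -
      have l: "l = 1 / sqrt (1 - c2) * v p"
        unfolding l_def u_lam[OF p_in] using vp by (simp add: power2_eq_square)
      have "l * l = (1 / sqrt (1 - c2) * (1 / sqrt (1 - c2))) * (v p * v p)"
        unfolding l by (simp only: mult_ac)
      also have "1 / sqrt (1 - c2) * (1 / sqrt (1 - c2)) = 1 / (sqrt (1 - c2) * sqrt (1 - c2))"
        by (simp only: times_divide_times_eq mult_1)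
      also have "sqrt (1 - c2) * sqrt (1 - c2) = 1 - c2" using c2 by simp
      finally show ?thesis unfolding vp by simp
    qed
    have Z: "K1 * (1 + l * l) - l * l * K0 / m = 0"
    proof -
      have q: "1 - c2 \<noteq> 0" using c2 by simp
      have e: "1 + l * l = 1 / (1 - c2)"
      proof -
        have d: "(1 - c2) / (1 - c2) = 1" by (rule divide_self[OF q])
        have "1 + c2 / (1 - c2) = (1 - c2) / (1 - c2) + c2 / (1 - c2)" by (simp only: d)
        also have "\<dots> = ((1 - c2) + c2) / (1 - c2)" by (rule add_divide_distrib[symmetric])
        also have "\<dots> = 1 / (1 - c2)" by simp
        finally show ?thesis unfolding L2 .
      qed
      have t2: "l * l * K0 / m = K1 / (1 - c2)"
      proof -
        have "l * l * K0 / m = (c2 * K0) / ((1 - c2) * m)" unfolding L2 by simp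
        also have "\<dots> = (m * K1) / ((1 - c2) * m)" unfolding c2K ..
        also have "\<dots> = K1 / (1 - c2)" using m by simp
        finally show ?thesis .
      qed
      show ?thesis unfolding e t2 by simp
    qed
    have Kd: "(K has_field_derivative K1) (at m)" unfolding K_def K1_def by (rule K_deriv[OF m s0])
    have dk1: "deriv k1 m = K1 * K m + K1 * K m"
      unfolding k1_def by (rule DERIV_imp_deriv[OF DERIV_mult[OF Kd Kd]])
    have mm: "m * m \<noteq> 0" using m by simp
    note X = DERIV_mult[OF DERIV_mult[OF DERIV_const[of "mu^2"] DERIV_mult[OF Kd Kd]]
            DERIV_inverse_fun[OF DERIV_mult[OF DERIV_ident DERIV_ident] mm]]
    have dk2: "deriv k2 m = 2 * K1 * K m * mu^2 * inverse (m * m)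
        - 2 * m * inverse ((m * m) * (m * m)) * (mu^2 * (K m * K m))"
      unfolding k2_def
      by (rule DERIV_imp_deriv, rule DERIV_cong[OF X]) (simp add: power2_eq_square algebra_simps)
    have a0: "a \<sigma>0 = - A" unfolding a_def A_def using through_p by simp
    have e0: "e \<sigma>0 = - A * inverse \<bar>Dl\<bar>" unfolding e_def a0 D_def Dl_def using through_p by simp
    have mu2: "mu^2 = \<bar>Dl\<bar> * (m * m) * (l * l)"
      unfolding mu_def Dl_def m_def l_def by (simp add: power_mult_distrib power2_eq_square[symmetric])
    have "deriv k1 (N \<sigma>0) * a \<sigma>0 + deriv k2 (N \<sigma>0) * e \<sigma>0 = -2 * A * K0 * (K1 * (1 + l * l) - l * l * K0 / m)"
      unfolding Np m_def[symmetric] dk1 dk2 a0 e0 mu2 K0_def using Dl m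
      by (simp add: field_simps power2_eq_square)
    then show ?thesis unfolding Z by simp
  qed
  have "dderiv (0, 1) F (\<sigma>0, N \<sigma>0) = 0 \<and> dderiv (1, 0) F (\<sigma>0, N \<sigma>0) = 0 \<and>
    dderiv (1, 0) (dderiv (1, 0) F) (\<sigma>0, N \<sigma>0) * dderiv (0, 1) (dderiv (0, 1) F) (\<sigma>0, N \<sigma>0)
      - (dderiv (1, 0) (dderiv (0, 1) F) (\<sigma>0, N \<sigma>0))^2 \<le> 0"
    by (rule hess_abstract[OF Ca Ce Ck1 Ck2 CN \<sigma>0_in NT Feq const Fn0])
  then show ?thesis unfolding Let_def F_def s0_def mu_def Np .
qed

end

theorem theorem7:
  fixes U :: "(real^'n::finite) set" and p :: "real^'n" and tau lam :: 'n
    and g :: "real^'n \<Rightarrow> real^'n^'n" and u :: "real^'n \<Rightarrow> real^'n"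
    and n h P s T v :: "real^'n \<Rightarrow> real" and H :: "real \<times> real \<Rightarrow> real"
    and \<gamma> :: "real \<Rightarrow> real^'n" and I :: "real set" and \<sigma>0 :: real
  assumes U_open: "open U" and p_in: "p \<in> U" and tau_lam: "tau \<noteq> lam"
    and lorentz: "\<forall>x\<in>U. lorentzian_matrix (g x)"
    and g_C2: "\<forall>i j. C2_on U (\<lambda>x. g x $ i $ j)"
    and killing: "\<forall>x\<in>U. \<forall>i j. pd tau (\<lambda>y. g y $ i $ j) x = 0"
    and timelike: "\<forall>x\<in>U. g x $ tau $ tau < 0"
    and eta_unit: "\<forall>x\<in>U. g x $ lam $ lam = 1"
    and eta_orth: "\<forall>x\<in>U. g x $ tau $ lam = 0"
    and pos: "\<forall>x\<in>U. n x > 0 \<and> h x > 0 \<and> P x > 0 \<and> s x > 0 \<and> T x > 0"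
    and reg: "C2_on U n" "C2_on U h" "C2_on U P" "C2_on U s" "C2_on U T"
             "\<forall>i. C2_on U (\<lambda>x. u x $ i)"
    and unit_u: "\<forall>x\<in>U. u x \<bullet> (g x *v u x) = -1"
    and first_law: "\<forall>x\<in>U. \<forall>k. pd k h x = T x * pd k s x + pd k P x / n x"
    and continuity: "\<forall>x\<in>U. cov_div_vec g (\<lambda>y. n y *\<^sub>R u y) x = 0"
    and euler: "\<forall>x\<in>U. \<forall>b. cov_div_tensor g
        (\<lambda>y. \<chi> a c. n y * h y * (u y $ a) * (u y $ c) + P y * matrix_inv (g y) $ a $ c) b x = 0"
    and eos_C2: "C2_on ({0<..} \<times> {0<..}) H"
    and eos: "\<forall>m>0. \<forall>\<sigma>>0. H (m, \<sigma>) > 0 \<and> 0 < sound_speed_sq H m \<sigma> \<and> sound_speed_sq H m \<sigma> < 1"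
    and h_eos: "\<forall>x\<in>U. h x = H (n x, s x)"
    and steady: "\<forall>x\<in>U. pd tau P x = 0 \<and> pd tau s x = 0 \<and> (\<forall>i. pd tau (\<lambda>y. u y $ i) x = 0)"
    and velocity: "\<forall>x\<in>U. 0 \<le> v x \<and> v x < 1 \<and>
        u x = (1 / sqrt (1 - (v x)^2)) *\<^sub>R ((1 / sqrt \<bar>g x $ tau $ tau\<bar>) *\<^sub>R axis tau 1 + v x *\<^sub>R axis lam 1)"
    and I_open: "open I" and I_interval: "is_interval I"
    and worldline: "\<forall>\<sigma>\<in>I. \<gamma> \<sigma> \<in> U \<and> (\<gamma> has_vector_derivative u (\<gamma> \<sigma>)) (at \<sigma>)"
    and \<sigma>0_in: "\<sigma>0 \<in> I" and through_p: "\<gamma> \<sigma>0 = p"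
    and sonic: "v p = sqrt (sound_speed_sq H (n p) (s p))"
  shows "let F = fluid_F H (s p) (sqrt \<bar>det (g p)\<bar> * n p * (u p $ lam)) g tau \<gamma>;
             pc = (\<sigma>0, n p)
         in dderiv (0, 1) F pc = 0 \<and> dderiv (1, 0) F pc = 0 \<and>
            dderiv (1, 0) (dderiv (1, 0) F) pc * dderiv (0, 1) (dderiv (0, 1) F) pc
              - (dderiv (1, 0) (dderiv (0, 1) F) pc)^2 \<le> 0"
proof -
  interpret fluid U p tau lam g u n h P s T v H \<gamma> I \<sigma>0
    by (unfold_locales) (fact assms)+
  show ?thesis by (rule main[OF sonic])
qed

end
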